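(* Let $\mathbb{K}$ be a field, $S=\mathbb{K}[x_1,\ldots,x_{2m}]$, and let $H$ be a simple graph on $\{x_1,\ldots,x_m\}$. Let $I\subseteq S$ be a support-$2$ monomial ideal such that $G(I)$ is the whiskered graph $W_H$, i.e. $E(G(I))=E(H)\cup\{\{x_1,x_{m+1}\},\ldots,\{x_m,x_{2m}\}\}$. Assume that $I$ has no embedded associated primes, $G(I)$ is triangle-free, and $\alpha_{i,j}\le 1$ for all $1\le i,j\le 2m$. Then the following are equivalent: (1) $I^{(2)}=I^2$; (2) for each edge $\{x_i,x_j\}\in E(H)$, either ($w_{i,m+i}=w_{i,j}$ and $w_{j,m+j}=w_{j,i}$) or ($w_{i,m+i}\ge 2w_{i,j}$ and $w_{j,m+j}\ge 2w_{j,i}$).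
   Context: For a monomial ideal $I$, $\mathcal{G}(I)$ denotes its minimal set of monomial generators. $I$ is a support-$2$ monomial ideal if every element of $\mathcal{G}(I)$ has the form $x_i^ax_j^b$ with $i<j$ and $a,b\ge 1$. The underlying simple graph $G(I)$ has an edge $\{x_i,x_j\}$ whenever some element of $\mathcal{G}(I)$ has support $\{x_i,x_j\}$. $\alpha_{i,j}$ is the number of elements of $\mathcal{G}(I)$ with support exactly $\{x_i,x_j\}$ (so here each edge has exactly one such generator). For an edge $\{x_i,x_j\}$ of $G(I)$, $w_{i,j}$ denotes the exponent of $x_i$ in the unique element of $\mathcal{G}(I)$ with support $\{x_i,x_j\}$ (so that generator is $x_i^{w_{i,j}}x_j^{w_{j,i}}$). Symbolic power: $I^{(2)}=\bigcap_{P\in\mathrm{MinAss}(I)}(I^2S_P\cap S)$ over the minimal primes of $I$. *)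

theory Defs
  imports "HOL-Library.Poly_Mapping"
begin

text \<open>Multivariate polynomials over a field: finitely supported maps from monomials
  (exponent vectors) to coefficients.
  Variable x_i is index i.\<close>

type_synonym 'k mpoly = "(nat \<Rightarrow>\<^sub>0 nat) \<Rightarrow>\<^sub>0 'k"

definition poly_ring :: "nat \<Rightarrow> 'k::field mpoly set" where
  "poly_ring n = {p. \<forall>mon \<in> Poly_Mapping.keys p. Poly_Mapping.keys (mon :: nat \<Rightarrow>\<^sub>0 nat) \<subseteq> {1..n}}"

definition mono2 :: "nat \<Rightarrow> nat \<Rightarrow> nat \<Rightarrow> nat \<Rightarrow> 'k::field mpoly" where
  "mono2 i a j b = Poly_Mapping.single (Poly_Mapping.single i a + Poly_Mapping.single j b) 1"

definition is_ideal :: "'k::field mpoly set \<Rightarrow> 'k mpoly set \<Rightarrow> bool" where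
  "is_ideal S J \<longleftrightarrow> J \<subseteq> S \<and> 0 \<in> J \<and> (\<forall>a\<in>J. \<forall>b\<in>J. a + b \<in> J)
     \<and> (\<forall>s\<in>S. \<forall>a\<in>J. s * a \<in> J)"

definition gen_ideal :: "'k::field mpoly set \<Rightarrow> 'k mpoly set \<Rightarrow> 'k mpoly set" where
  "gen_ideal S G = \<Inter>{J. is_ideal S J \<and> G \<subseteq> J}"

definition ideal_prod :: "'k::field mpoly set \<Rightarrow> 'k mpoly set \<Rightarrow> 'k mpoly set \<Rightarrow> 'k mpoly set" where
  "ideal_prod S I J = gen_ideal S {a * b | a b. a \<in> I \<and> b \<in> J}"

definition is_prime_ideal :: "'k::field mpoly set \<Rightarrow> 'k mpoly set \<Rightarrow> bool" where
  "is_prime_ideal S P \<longleftrightarrow> is_ideal S P \<and> P \<noteq> S \<and>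
     (\<forall>a\<in>S. \<forall>b\<in>S. a * b \<in> P \<longrightarrow> a \<in> P \<or> b \<in> P)"

definition min_primes :: "'k::field mpoly set \<Rightarrow> 'k mpoly set \<Rightarrow> 'k mpoly set set" where
  "min_primes S I = {P. is_prime_ideal S P \<and> I \<subseteq> P \<and>
     (\<forall>Q. is_prime_ideal S Q \<and> I \<subseteq> Q \<and> Q \<subseteq> P \<longrightarrow> Q = P)}"

definition ass_primes :: "'k::field mpoly set \<Rightarrow> 'k mpoly set \<Rightarrow> 'k mpoly set set" where
  "ass_primes S I = {P. is_prime_ideal S P \<and> (\<exists>f\<in>S. P = {g\<in>S. g * f \<in> I})}"

text \<open>Second symbolic power: intersection over minimal primes P of I^2 S_P \<inter> S,
  where I^2 S_P \<inter> S = {f. \<exists>s\<notin>P. s f \<in> I^2}.\<close>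
definition symb_power2 :: "'k::field mpoly set \<Rightarrow> 'k mpoly set \<Rightarrow> 'k mpoly set" where
  "symb_power2 S I = S \<inter> (\<Inter>P\<in>min_primes S I.
     {f\<in>S. \<exists>s\<in>S - P. s * f \<in> ideal_prod S I I})"

definition whiskered :: "nat \<Rightarrow> nat set set \<Rightarrow> nat set set" where
  "whiskered m EH = EH \<union> {{i, m + i} | i. i \<in> {1..m}}"

definition triangle_free :: "nat set set \<Rightarrow> bool" where
  "triangle_free E \<longleftrightarrow> \<not> (\<exists>a b c. {a,b} \<in> E \<and> {b,c} \<in> E \<and> {a,c} \<in> E
      \<and> a \<noteq> b \<and> b \<noteq> c \<and> a \<noteq> c)"

end

theory Submission
  imports Defs
begin

abbreviation lk where "lk \<equiv> Poly_Mapping.lookup"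
abbreviation ks where "ks \<equiv> Poly_Mapping.keys"
abbreviation sg where "sg \<equiv> Poly_Mapping.single"

lemma keys_add_exp: "ks ((a::nat\<Rightarrow>\<^sub>0nat) + b) = ks a \<union> ks b"
  by (auto simp: in_keys_iff lookup_add)

lemma PR_zero: "0 \<in> poly_ring n"
  by (simp add: poly_ring_def)

lemma PR_add: assumes "a \<in> poly_ring n" "b \<in> poly_ring n" shows "a + b \<in> poly_ring n"
  unfolding poly_ring_def mem_Collect_eq
proof (intro ballI)
  fix mon assume "mon \<in> ks (a + b)"
  then have "mon \<in> ks a \<or> mon \<in> ks b" using keys_add[of a b] by auto
  then show "ks mon \<subseteq> {1..n}" using assms unfolding poly_ring_def by blast
qed

lemma PR_uminus: "a \<in> poly_ring n \<Longrightarrow> - a \<in> poly_ring n"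
  unfolding poly_ring_def by simp

lemma PR_diff: assumes "a \<in> poly_ring n" "b \<in> poly_ring n" shows "a - b \<in> poly_ring n"
  unfolding poly_ring_def mem_Collect_eq
proof (intro ballI)
  fix mon assume "mon \<in> ks (a - b)"
  then have "mon \<in> ks a \<or> mon \<in> ks b" using keys_diff[of a b] by auto
  then show "ks mon \<subseteq> {1..n}" using assms unfolding poly_ring_def by blast
qed

lemma PR_mult: "a \<in> poly_ring n \<Longrightarrow> b \<in> poly_ring n \<Longrightarrow> a * b \<in> poly_ring n"
  unfolding poly_ring_def mem_Collect_eq
proof (intro ballI)
  fix mon assume a: "\<forall>mon\<in>ks a. ks mon \<subseteq> {1..n}" and b: "\<forall>mon\<in>ks b. ks mon \<subseteq> {1..n}"
    and m: "mon \<in> ks (a * b)"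
  then obtain x y where "mon = x + y" "x \<in> ks a" "y \<in> ks b" using keys_mult[of a b] by blast
  then show "ks mon \<subseteq> {1..n}" using a b keys_add_exp[of x y] by simp
qed

lemma PR_single: "ks a \<subseteq> {1..n} \<Longrightarrow> sg a c \<in> poly_ring n"
  unfolding poly_ring_def by auto

lemma PR_one: "1 \<in> poly_ring n"
  unfolding poly_ring_def by simp

lemma PR_sum: "finite A \<Longrightarrow> (\<And>x. x \<in> A \<Longrightarrow> f x \<in> poly_ring n) \<Longrightarrow> sum f A \<in> poly_ring n"
  by (induction A rule: finite_induct) (auto intro: PR_zero PR_add)

lemma ideal_S: "is_ideal (poly_ring n) (poly_ring n)"
  unfolding is_ideal_def using PR_zero PR_add PR_mult by blast

lemma ideal_sub: "is_ideal S J \<Longrightarrow> J \<subseteq> S" unfolding is_ideal_def by blast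
lemma ideal_0: "is_ideal S J \<Longrightarrow> 0 \<in> J" unfolding is_ideal_def by blast
lemma ideal_add: "is_ideal S J \<Longrightarrow> a \<in> J \<Longrightarrow> b \<in> J \<Longrightarrow> a + b \<in> J" unfolding is_ideal_def by blast
lemma ideal_mult: "is_ideal S J \<Longrightarrow> s \<in> S \<Longrightarrow> a \<in> J \<Longrightarrow> s * a \<in> J" unfolding is_ideal_def by blast

lemma ideal_uminus: "is_ideal (poly_ring n) J \<Longrightarrow> a \<in> J \<Longrightarrow> - a \<in> J"
proof -
  assume J: "is_ideal (poly_ring n) J" and a: "a \<in> J"
  have "- 1 \<in> poly_ring n" using PR_uminus PR_one by blast
  then have "(- 1) * a \<in> J" using ideal_mult[OF J] a by blast
  then show ?thesis by simp
qed

lemma ideal_diff: "is_ideal (poly_ring n) J \<Longrightarrow> a \<in> J \<Longrightarrow> b \<in> J \<Longrightarrow> a - b \<in> J"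
  using ideal_add[of _ J a "- b"] ideal_uminus[of n J b] by simp

lemma ideal_sum:
  assumes J: "is_ideal S J" and A: "finite A" and f: "\<And>x. x \<in> A \<Longrightarrow> f x \<in> J"
  shows "sum f A \<in> J"
  using A f by (induction A rule: finite_induct) (auto intro: ideal_0[OF J] ideal_add[OF J])

lemma ideal_one: "is_ideal (poly_ring n) J \<Longrightarrow> 1 \<in> J \<Longrightarrow> J = poly_ring n"
proof -
  assume J: "is_ideal (poly_ring n) J" and o: "1 \<in> J"
  have "s \<in> J" if "s \<in> poly_ring n" for s using ideal_mult[OF J that o] by simp
  with ideal_sub[OF J] show ?thesis by blast
qed

lemma gen_ideal_ideal:
  assumes "X \<subseteq> poly_ring n" shows "is_ideal (poly_ring n) (gen_ideal (poly_ring n) X)"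
proof -
  have ne: "poly_ring n \<in> {J. is_ideal (poly_ring n) J \<and> X \<subseteq> J}" using ideal_S assms by blast
  have 1: "gen_ideal (poly_ring n) X \<subseteq> poly_ring n" unfolding gen_ideal_def using ne by blast
  have 2: "0 \<in> gen_ideal (poly_ring n) X" unfolding gen_ideal_def using ideal_0 by blast
  have 3: "a + b \<in> gen_ideal (poly_ring n) X" if "a \<in> gen_ideal (poly_ring n) X" "b \<in> gen_ideal (poly_ring n) X" for a b
    using that unfolding gen_ideal_def using ideal_add by blast
  have 4: "s * a \<in> gen_ideal (poly_ring n) X" if "s \<in> poly_ring n" "a \<in> gen_ideal (poly_ring n) X" for s a
    using that unfolding gen_ideal_def using ideal_mult by blast
  show ?thesis unfolding is_ideal_def using 1 2 3 4 by blast
qed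

lemma gen_ideal_sup: "X \<subseteq> gen_ideal S X"
  unfolding gen_ideal_def by blast

lemma gen_ideal_least: "is_ideal S J \<Longrightarrow> X \<subseteq> J \<Longrightarrow> gen_ideal S X \<subseteq> J"
  unfolding gen_ideal_def by blast

section \<open>Monomial ideals\<close>

definition MIB :: "nat \<Rightarrow> nat set \<Rightarrow> (nat \<Rightarrow>\<^sub>0 nat) set \<Rightarrow> 'k::field mpoly set" where
  "MIB n B G = {f \<in> poly_ring n. \<forall>a \<in> ks f. \<exists>g\<in>G. \<forall>k\<in>B. lk g k \<le> lk a k}"

lemma MIB_ideal: "is_ideal (poly_ring n) (MIB n B G :: 'k::field mpoly set)"
  unfolding is_ideal_def
proof (intro conjI ballI)
  show "MIB n B G \<subseteq> poly_ring n" unfolding MIB_def by blast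
  show "0 \<in> MIB n B G" unfolding MIB_def using PR_zero by simp
next
  fix a b :: "'k mpoly" assume a: "a \<in> MIB n B G" and b: "b \<in> MIB n B G"
  have "\<exists>g\<in>G. \<forall>k\<in>B. lk g k \<le> lk c k" if c: "c \<in> ks (a + b)" for c
  proof -
    have "c \<in> ks a \<or> c \<in> ks b" using c keys_add[of a b] by auto
    then show ?thesis using a b unfolding MIB_def by blast
  qed
  moreover have "a + b \<in> poly_ring n" using a b PR_add unfolding MIB_def by blast
  ultimately show "a + b \<in> MIB n B G" unfolding MIB_def by blast
next
  fix s a :: "'k mpoly" assume s: "s \<in> poly_ring n" and a: "a \<in> MIB n B G"
  show "s * a \<in> MIB n B G" unfolding MIB_def
  proof (intro CollectI conjI ballI)
    show "s * a \<in> poly_ring n" using PR_mult s a unfolding MIB_def by blast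
    fix c assume "c \<in> ks (s * a)"
    then obtain x y where c: "c = x + y" "x \<in> ks s" "y \<in> ks a" using keys_mult[of s a] by blast
    then obtain g where "g \<in> G" "\<forall>k\<in>B. lk g k \<le> lk y k" using a unfolding MIB_def by blast
    then show "\<exists>g\<in>G. \<forall>k\<in>B. lk g k \<le> lk c k" using c by (metis lookup_add trans_le_add2)
  qed
qed

lemma poly_decomp: "f = (\<Sum>a\<in>ks f. sg a (lk f a))"
proof (rule poly_mapping_eqI)
  fix k
  have "lk (\<Sum>a\<in>ks f. sg a (lk f a)) k = (\<Sum>a\<in>ks f. lk (sg a (lk f a)) k)"
    by (simp add: lookup_sum)
  also have "\<dots> = (\<Sum>a\<in>ks f. if a = k then lk f a else 0)"
    by (simp add: lookup_single when_def)
  also have "\<dots> = lk f k"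
    by (simp add: sum.delta in_keys_iff)
  finally show "lk f k = lk (\<Sum>a\<in>ks f. sg a (lk f a)) k" by simp
qed

lemma exp_split:
  assumes "\<forall>k. lk g k \<le> lk (a::nat\<Rightarrow>\<^sub>0nat) k"
  shows "(a - g) + g = a"
  by (rule poly_mapping_eqI) (use assms in \<open>simp add: lookup_add lookup_minus\<close>)

lemma keys_minus_exp: "ks ((a::nat\<Rightarrow>\<^sub>0nat) - g) \<subseteq> ks a"
  by (auto simp: in_keys_iff lookup_minus)

lemma MI_least:
  assumes J: "is_ideal (poly_ring n) J" and G: "\<And>g. g \<in> G \<Longrightarrow> sg g (1::'k::field) \<in> J"
  shows "MIB n UNIV G \<subseteq> (J :: 'k mpoly set)"
proof
  fix f :: "'k mpoly" assume f: "f \<in> MIB n UNIV G"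
  have "sg a (lk f a) \<in> J" if a: "a \<in> ks f" for a
  proof -
    obtain g where g: "g \<in> G" "\<forall>k. lk g k \<le> lk a k" using f a unfolding MIB_def by blast
    have aS: "ks a \<subseteq> {1..n}" using f a unfolding MIB_def poly_ring_def by blast
    have "sg a (lk f a) = sg (a - g) (lk f a) * sg g 1"
      by (simp add: mult_single exp_split[OF g(2)])
    moreover have "sg (a - g) (lk f a) \<in> poly_ring n"
      using PR_single[of "a - g" n] keys_minus_exp[of a g] aS by blast
    ultimately show ?thesis using ideal_mult[OF J] G g(1) by metis
  qed
  then have "(\<Sum>a\<in>ks f. sg a (lk f a)) \<in> J" by (intro ideal_sum[OF J]) auto
  then show "f \<in> J" using poly_decomp[of f] by simp
qed

lemma single_MIB:
  assumes "g \<in> G" "\<forall>k\<in>B. lk g k \<le> lk a k" "ks a \<subseteq> {1..n}"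
  shows "sg a c \<in> MIB n B G"
proof -
  have "sg a c \<in> poly_ring n" using PR_single assms(3) by blast
  moreover have "\<exists>g\<in>G. \<forall>k\<in>B. lk g k \<le> lk a k" using assms(1,2) by blast
  then have "\<forall>a'\<in>ks (sg a c). \<exists>g\<in>G. \<forall>k\<in>B. lk g k \<le> lk a' k" by simp
  ultimately show ?thesis unfolding MIB_def by blast
qed


definition restr :: "((nat\<Rightarrow>\<^sub>0nat) \<Rightarrow> bool) \<Rightarrow> 'k::field mpoly \<Rightarrow> 'k mpoly" where
  "restr Q f = Abs_poly_mapping (\<lambda>a. if Q a then lk f a else 0)"

lemma lk_restr: "lk (restr Q f) a = (if Q a then lk f a else 0)"
proof -
  have "{a. (if Q a then lk f a else 0) \<noteq> 0} \<subseteq> {a. lk f a \<noteq> 0}" by (auto split: if_splits)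
  then have "finite {a. (if Q a then lk f a else 0) \<noteq> 0}" using finite_subset finite_lookup by blast
  then show ?thesis unfolding restr_def by simp
qed

lemma ks_restr: "ks (restr Q f) = {a \<in> ks f. Q a}"
  by (auto simp: in_keys_iff lk_restr split: if_splits)

lemma restr_split: "f = restr Q f + restr (\<lambda>a. \<not> Q a) f"
  by (rule poly_mapping_eqI) (simp add: lookup_add lk_restr)

lemma PR_restr: "f \<in> poly_ring n \<Longrightarrow> restr Q f \<in> poly_ring n"
  unfolding poly_ring_def by (auto simp: ks_restr)

definition dB :: "nat set \<Rightarrow> (nat \<Rightarrow>\<^sub>0 nat) \<Rightarrow> nat" where
  "dB B a = (\<Sum>k\<in>B. lk a k)"

lemma dB_add: "dB B (a + b) = dB B a + dB B b"
  unfolding dB_def by (simp add: lookup_add sum.distrib)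

lemma dB_zero_iff: "finite B \<Longrightarrow> dB B a = 0 \<longleftrightarrow> (\<forall>k\<in>B. lk a k = 0)"
  unfolding dB_def by simp

section \<open>Localization lemma\<close>

lemma loc:
  fixes s f :: "'k::field mpoly"
  assumes B: "finite B" and s: "s \<in> poly_ring n" and f: "f \<in> poly_ring n"
    and s0ex: "\<exists>a\<in>ks s. \<forall>k\<in>B. lk a k = 0"
    and sf: "s * f \<in> MIB n B G"
  shows "f \<in> MIB n B G"
proof (rule ccontr)
  assume nf: "f \<notin> MIB n B G"
  define good where "good a = (\<exists>g\<in>G. \<forall>k\<in>B. lk g k \<le> lk a k)" for a
  have I: "is_ideal (poly_ring n) (MIB n B G :: 'k mpoly set)" by (rule MIB_ideal)
  have memI: "h \<in> MIB n B G \<longleftrightarrow> h \<in> poly_ring n \<and> (\<forall>a\<in>ks h. good a)" for h :: "'k mpoly"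
    unfolding MIB_def good_def by blast
  obtain a0 where a0: "a0 \<in> ks f" "\<not> good a0" using nf f memI by blast
  define f1 where "f1 = restr (\<lambda>a. \<not> good a) f"
  have f1S: "f1 \<in> poly_ring n" unfolding f1_def using PR_restr f by blast
  have a0f1: "a0 \<in> ks f1" unfolding f1_def using a0 by (simp add: ks_restr)
  have "restr good f \<in> MIB n B G" using memI PR_restr[OF f] by (auto simp: ks_restr)
  moreover have "f - f1 = restr good f" unfolding f1_def using restr_split[of f good] by (simp add: algebra_simps)
  ultimately have ff1: "f - f1 \<in> MIB n B G" by simp
  have "s * f1 = s * f - s * (f - f1)" by (simp add: algebra_simps)
  moreover have "s * (f - f1) \<in> MIB n B G" using ideal_mult[OF I s ff1] .
  ultimately have sf1: "s * f1 \<in> MIB n B G" using ideal_diff[OF I sf] by simp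
  define d where "d = Min (dB B ` ks f1)"
  have fin1: "finite (ks f1)" by simp
  have d_le: "d \<le> dB B a" if "a \<in> ks f1" for a unfolding d_def using fin1 that by simp
  have "d \<in> dB B ` ks f1" unfolding d_def using fin1 a0f1 by (intro Min_in) auto
  then obtain a1 where a1: "a1 \<in> ks f1" "dB B a1 = d" by blast
  define f2 where "f2 = restr (\<lambda>a. dB B a = d) f1"
  define f3 where "f3 = restr (\<lambda>a. dB B a \<noteq> d) f1"
  have f123: "f1 = f2 + f3" unfolding f2_def f3_def by (rule restr_split)
  define s0 where "s0 = restr (\<lambda>a. dB B a = 0) s"
  define s1 where "s1 = restr (\<lambda>a. dB B a \<noteq> 0) s"
  have s01: "s = s0 + s1" unfolding s0_def s1_def by (rule restr_split)
  obtain x0 where x0: "x0 \<in> ks s" "\<forall>k\<in>B. lk x0 k = 0" using s0ex by blast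
  have "x0 \<in> ks s0" unfolding s0_def using x0 dB_zero_iff[OF B] by (simp add: ks_restr)
  then have s0nz: "s0 \<noteq> 0" by auto
  have "a1 \<in> ks f2" unfolding f2_def using a1 by (simp add: ks_restr)
  then have f2nz: "f2 \<noteq> 0" by auto
  define p where "p = s0 * f2"
  have "p \<noteq> 0" unfolding p_def using s0nz f2nz by simp
  then obtain c where c: "c \<in> ks p" by fastforce
  then obtain x y where xy: "c = x + y" "x \<in> ks s0" "y \<in> ks f2" unfolding p_def using keys_mult[of s0 f2] by blast
  have x0B: "\<forall>k\<in>B. lk x k = 0" using xy(2) dB_zero_iff[OF B, of x] unfolding s0_def by (simp add: ks_restr)
  have ydat: "dB B y = d" "\<not> good y" "y \<in> ks f1" using xy(3) unfolding f2_def f1_def by (auto simp: ks_restr)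
  have dc: "dB B c = d" using xy(1) dB_add[of B x y] dB_zero_iff[OF B, of x] x0B ydat by simp
  have ngc: "\<not> good c"
  proof
    assume "good c"
    then obtain g where g: "g \<in> G" "\<forall>k\<in>B. lk g k \<le> lk c k" unfolding good_def by blast
    have "\<forall>k\<in>B. lk c k = lk y k" using xy(1) x0B by (simp add: lookup_add)
    then have "good y" unfolding good_def using g by metis
    then show False using ydat by blast
  qed
  define r where "r = s0 * f3 + s1 * f1"
  have "s * f1 = p + r" unfolding p_def r_def using s01 f123 by (simp add: algebra_simps)
  have rk: "d < dB B z" if z: "z \<in> ks r" for z
  proof -
    have "z \<in> ks (s0 * f3) \<or> z \<in> ks (s1 * f1)" using z keys_add[of "s0 * f3" "s1 * f1"] unfolding r_def by auto
    then show ?thesis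
    proof
      assume "z \<in> ks (s0 * f3)"
      then obtain x' y' where "z = x' + y'" "x' \<in> ks s0" "y' \<in> ks f3" using keys_mult[of s0 f3] by blast
      moreover have "y' \<in> ks f1 \<and> dB B y' \<noteq> d" using \<open>y' \<in> ks f3\<close> unfolding f3_def by (simp add: ks_restr)
      ultimately show ?thesis using d_le[of y'] dB_add[of B x' y'] by simp
    next
      assume "z \<in> ks (s1 * f1)"
      then obtain x' y' where "z = x' + y'" "x' \<in> ks s1" "y' \<in> ks f1" using keys_mult[of s1 f1] by blast
      moreover have "dB B x' \<noteq> 0" using \<open>x' \<in> ks s1\<close> unfolding s1_def by (simp add: ks_restr)
      ultimately show ?thesis using d_le[of y'] dB_add[of B x' y'] by simp
    qed
  qed
  have "c \<notin> ks r" using rk dc by force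
  then have "lk r c = 0" by (simp add: in_keys_iff)
  moreover have "lk p c \<noteq> 0" using c by (simp add: in_keys_iff)
  ultimately have "lk (s * f1) c \<noteq> 0" using \<open>s * f1 = p + r\<close> by (simp add: lookup_add)
  then have "c \<in> ks (s * f1)" by (simp add: in_keys_iff)
  then have "good c" using sf1 memI by blast
  then show False using ngc by blast
qed

section \<open>Monomial primes\<close>

definition PB :: "nat \<Rightarrow> nat set \<Rightarrow> 'k::field mpoly set" where
  "PB n B = {f \<in> poly_ring n. \<forall>a\<in>ks f. \<exists>k\<in>B. lk a k \<noteq> 0}"

definition units :: "nat set \<Rightarrow> (nat \<Rightarrow>\<^sub>0 nat) set" where
  "units B = {sg k 1 | k. k \<in> B}"

lemma units_B: "(\<exists>g\<in>units B. \<forall>k\<in>B. lk g k \<le> lk a k) \<longleftrightarrow> (\<exists>k\<in>B. lk a k \<noteq> 0)"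
proof
  assume "\<exists>g\<in>units B. \<forall>k\<in>B. lk g k \<le> lk a k"
  then obtain k where k: "k \<in> B" "\<forall>k'\<in>B. lk (sg k 1) k' \<le> lk a k'" unfolding units_def by blast
  then have "1 \<le> lk a k" by (metis lookup_single_eq)
  then show "\<exists>k\<in>B. lk a k \<noteq> 0" using k(1) by force
next
  assume "\<exists>k\<in>B. lk a k \<noteq> 0"
  then obtain k where k: "k \<in> B" "lk a k \<noteq> 0" by blast
  have "\<forall>k'\<in>B. lk (sg k 1) k' \<le> lk a k'" using k(2) by (simp add: lookup_single when_def)
  then show "\<exists>g\<in>units B. \<forall>k\<in>B. lk g k \<le> lk a k" using k(1) unfolding units_def by blast
qed

lemma units_U: "(\<exists>g\<in>units B. \<forall>k\<in>UNIV. lk g k \<le> lk a k) \<longleftrightarrow> (\<exists>k\<in>B. lk a k \<noteq> 0)"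
proof
  assume "\<exists>g\<in>units B. \<forall>k\<in>UNIV. lk g k \<le> lk a k"
  then obtain k where k: "k \<in> B" "\<forall>k'. lk (sg k 1) k' \<le> lk a k'" unfolding units_def by blast
  then have "1 \<le> lk a k" by (metis lookup_single_eq)
  then show "\<exists>k\<in>B. lk a k \<noteq> 0" using k(1) by force
next
  assume "\<exists>k\<in>B. lk a k \<noteq> 0"
  then obtain k where k: "k \<in> B" "lk a k \<noteq> 0" by blast
  have "\<forall>k'. lk (sg k 1) k' \<le> lk a k'" using k(2) by (simp add: lookup_single when_def)
  then show "\<exists>g\<in>units B. \<forall>k\<in>UNIV. lk g k \<le> lk a k" using k(1) unfolding units_def by blast
qed

lemma PB_MIB: "PB n B = MIB n B (units B)"
  unfolding PB_def MIB_def using units_B by blast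

lemma PB_MI: "PB n B = MIB n UNIV (units B)"
  unfolding PB_def MIB_def using units_U by blast

lemma PB_prime:
  assumes B: "finite B"
  shows "is_prime_ideal (poly_ring n) (PB n B :: 'k::field mpoly set)"
proof -
  have 1: "is_ideal (poly_ring n) (PB n B :: 'k mpoly set)" unfolding PB_MIB by (rule MIB_ideal)
  have "(1::'k mpoly) \<notin> PB n B" unfolding PB_def by simp
  then have 2: "PB n B \<noteq> (poly_ring n :: 'k mpoly set)" using PR_one by blast
  have 3: "a \<in> PB n B \<or> b \<in> PB n B" if a: "a \<in> poly_ring n" and b: "b \<in> poly_ring n" and ab: "a * b \<in> PB n B" for a b :: "'k mpoly"
  proof (cases "a \<in> PB n B")
    case False
    then have "\<exists>x\<in>ks a. \<forall>k\<in>B. lk x k = 0" using a unfolding PB_def by blast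
    then have "b \<in> MIB n B (units B)" using loc[OF B a b] ab unfolding PB_MIB by blast
    then show ?thesis unfolding PB_MIB by blast
  qed simp
  show ?thesis unfolding is_prime_ideal_def using 1 2 3 by blast
qed

definition var :: "nat \<Rightarrow> 'k::field mpoly" where
  "var k = sg (sg k 1) 1"

lemma mon_prime_var:
  fixes P :: "'k::field mpoly set"
  assumes P: "is_prime_ideal (poly_ring n) P" and sig: "ks \<sigma> \<subseteq> {1..n}" and m: "sg \<sigma> 1 \<in> P"
  shows "\<exists>k\<in>ks \<sigma>. var k \<in> P"
proof -
  have "\<forall>\<sigma>. (\<Sum>k\<in>{1..n}. lk \<sigma> k) = N \<longrightarrow> ks \<sigma> \<subseteq> {1..n} \<longrightarrow> sg \<sigma> (1::'k) \<in> P \<longrightarrow> (\<exists>k\<in>ks \<sigma>. var k \<in> P)" for N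
  proof (induction N rule: less_induct)
    case (less N)
    show ?case
    proof (intro allI impI)
      fix \<sigma> :: "nat \<Rightarrow>\<^sub>0 nat" assume N: "(\<Sum>k\<in>{1..n}. lk \<sigma> k) = N" and sS: "ks \<sigma> \<subseteq> {1..n}" and mP: "sg \<sigma> (1::'k) \<in> P"
      show "\<exists>k\<in>ks \<sigma>. var k \<in> P"
      proof (cases "\<sigma> = 0")
        case True
        then have "(1::'k mpoly) \<in> P" using mP by simp
        then have "P = poly_ring n" using ideal_one P unfolding is_prime_ideal_def by blast
        then show ?thesis using P unfolding is_prime_ideal_def by blast
      next
        case False
        then obtain k where k: "k \<in> ks \<sigma>" by fastforce
        define \<tau> where "\<tau> = \<sigma> - sg k 1"
        have le: "\<forall>k'. lk (sg k 1) k' \<le> lk \<sigma> k'" using k by (simp add: lookup_single when_def in_keys_iff)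
        have st: "\<sigma> = \<tau> + sg k 1" unfolding \<tau>_def using exp_split[OF le] by simp
        have tk: "ks \<tau> \<subseteq> ks \<sigma>" unfolding \<tau>_def by (rule keys_minus_exp)
        have kn: "k \<in> {1..n}" using k sS by blast
        have "sg \<sigma> (1::'k) = sg \<tau> 1 * var k" unfolding var_def by (simp add: mult_single st)
        moreover have "sg \<tau> (1::'k) \<in> poly_ring n" using PR_single tk sS by blast
        moreover have "var k \<in> (poly_ring n :: 'k mpoly set)"
        proof -
          have "ks (sg k (1::nat)) \<subseteq> {1..n}" using kn by simp
          then show ?thesis unfolding var_def by (rule PR_single)
        qed
        ultimately have "sg \<tau> (1::'k) \<in> P \<or> var k \<in> P" using P mP unfolding is_prime_ideal_def by metis
        then show ?thesis
        proof
          assume tP: "sg \<tau> (1::'k) \<in> P"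
          have lt: "(\<Sum>k\<in>{1..n}. lk \<tau> k) < N"
          proof -
            have "\<forall>k'\<in>{1..n}. lk \<tau> k' \<le> lk \<sigma> k'" unfolding \<tau>_def by (simp add: lookup_minus)
            moreover have "lk \<tau> k < lk \<sigma> k" unfolding \<tau>_def using k by (simp add: lookup_minus in_keys_iff)
            ultimately have "(\<Sum>k\<in>{1..n}. lk \<tau> k) < (\<Sum>k\<in>{1..n}. lk \<sigma> k)"
              using kn by (intro sum_strict_mono_ex1) auto
            then show ?thesis using N by simp
          qed
          obtain k' where "k' \<in> ks \<tau>" "var k' \<in> P" using less.IH[OF lt] tk sS tP by blast
          then show ?thesis using tk by blast
        next
          assume "var k \<in> P" then show ?thesis using k by blast
        qed
      qed
    qed
  qed
  then show ?thesis using sig m by blast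
qed


locale wsetup =
  fixes m :: nat and EH :: "nat set set" and w :: "nat \<Rightarrow> nat \<Rightarrow> nat"
  assumes H_simple: "\<forall>e\<in>EH. \<exists>i j. e = {i, j} \<and> i \<noteq> j \<and> i \<in> {1..m} \<and> j \<in> {1..m}"
    and w_pos: "\<forall>i j. {i, j} \<in> whiskered m EH \<and> i \<noteq> j \<longrightarrow> w i j \<ge> 1"
    and tri_free: "triangle_free (whiskered m EH)"
begin

abbreviation "W \<equiv> whiskered m EH"
abbreviation "V \<equiv> {1..m}"

definition e :: "nat \<Rightarrow> nat \<Rightarrow> nat \<Rightarrow>\<^sub>0 nat" where
  "e x y = sg x (w x y) + sg y (w y x)"

lemma Ef: "lk (e x y) k = (if k = x then w x y else 0) + (if k = y then w y x else 0)"
  unfolding e_def by (simp add: lookup_add lookup_single when_def)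

lemma e_sym: "e x y = e y x"
  unfolding e_def by (simp add: add.commute)

definition cond2 :: bool where
  "cond2 = (\<forall>i j. {i, j} \<in> EH \<longrightarrow>
       (w i (m + i) = w i j \<and> w j (m + j) = w j i) \<or>
       (w i (m + i) \<ge> 2 * w i j \<and> w j (m + j) \<ge> 2 * w j i))"

lemma EH_edge: "{x, y} \<in> EH \<Longrightarrow> x \<noteq> y \<and> x \<in> V \<and> y \<in> V"
proof -
  assume "{x, y} \<in> EH"
  then obtain i j where ij: "{x, y} = {i, j}" "i \<noteq> j" "i \<in> V" "j \<in> V" using H_simple by blast
  then show ?thesis by (metis doubleton_eq_iff)
qed

lemma W_iff: "{x, y} \<in> W \<longleftrightarrow> {x, y} \<in> EH \<or> (\<exists>i\<in>V. (x = i \<and> y = m + i) \<or> (x = m + i \<and> y = i))"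
  unfolding whiskered_def by (auto simp: doubleton_eq_iff)

lemma W_cases:
  assumes "{x, y} \<in> W"
  obtains "{x, y} \<in> EH" "x \<noteq> y" "x \<in> V" "y \<in> V"
    | i where "i \<in> V" "x = i" "y = m + i"
    | i where "i \<in> V" "x = m + i" "y = i"
  using assms W_iff EH_edge by metis

lemma W_neq: "{x, y} \<in> W \<Longrightarrow> x \<noteq> y"
  by (erule W_cases) auto

lemma W_range: "{x, y} \<in> W \<Longrightarrow> x \<in> {1..2*m} \<and> y \<in> {1..2*m}"
  by (erule W_cases) auto

lemma W_V: "{l, y} \<in> W \<Longrightarrow> l \<in> V \<Longrightarrow> y = m + l \<or> {l, y} \<in> EH"
  by (erule W_cases) auto

lemma W_m: "{x, y} \<in> W \<Longrightarrow> i \<in> V \<Longrightarrow> x = m + i \<Longrightarrow> y = i"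
  by (erule W_cases) auto

lemma W_sym: "{x, y} \<in> W \<Longrightarrow> {y, x} \<in> W"
  by (simp add: insert_commute)

lemma whisk_W: "i \<in> V \<Longrightarrow> {i, m + i} \<in> W"
  using W_iff by blast

lemma EH_W: "{x, y} \<in> EH \<Longrightarrow> {x, y} \<in> W"
  using W_iff by blast

lemma wpos: "{x, y} \<in> W \<Longrightarrow> w x y \<ge> 1"
  using w_pos W_neq by blast

lemma ks_e: "{x, y} \<in> W \<Longrightarrow> ks (e x y) = {x, y}"
proof -
  assume xy: "{x, y} \<in> W"
  have "w x y \<ge> 1" "w y x \<ge> 1" using wpos xy W_sym by blast+
  then show ?thesis using W_neq[OF xy] by (auto simp: in_keys_iff Ef split: if_splits)
qed

lemma ks_e_range: "{x, y} \<in> W \<Longrightarrow> ks (e x y) \<subseteq> {1..2*m}"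
  using ks_e[of x y] W_range[of x y] by simp

definition GW :: "(nat \<Rightarrow>\<^sub>0 nat) set" where
  "GW = {e x y | x y. {x, y} \<in> W}"

definition G2 :: "(nat \<Rightarrow>\<^sub>0 nat) set" where
  "G2 = {g + h | g h. g \<in> GW \<and> h \<in> GW}"

lemma gens_eq: "{mono2 i (w i j) j (w j i) | i j. i < j \<and> {i, j} \<in> W} = (\<lambda>g. sg g (1::'k::field)) ` GW"
proof
  show "{mono2 i (w i j) j (w j i) | i j. i < j \<and> {i, j} \<in> W} \<subseteq> (\<lambda>g. sg g (1::'k)) ` GW"
    unfolding mono2_def GW_def e_def by blast
next
  show "(\<lambda>g. sg g (1::'k)) ` GW \<subseteq> {mono2 i (w i j) j (w j i) | i j. i < j \<and> {i, j} \<in> W}"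
  proof
    fix p :: "'k mpoly" assume "p \<in> (\<lambda>g. sg g 1) ` GW"
    then obtain x y where xy: "p = sg (e x y) 1" "{x, y} \<in> W" unfolding GW_def by blast
    have "x < y \<or> y < x" using W_neq[OF xy(2)] by arith
    then show "p \<in> {mono2 i (w i j) j (w j i) | i j. i < j \<and> {i, j} \<in> W}"
    proof
      assume "x < y" then show ?thesis using xy unfolding mono2_def e_def by blast
    next
      assume "y < x"
      moreover have "{y, x} \<in> W" using W_sym xy(2) by blast
      moreover have "p = mono2 y (w y x) x (w x y)" using xy(1) e_sym[of x y] unfolding mono2_def e_def by simp
      ultimately show ?thesis by blast
    qed
  qed
qed

lemma GW_range: "g \<in> GW \<Longrightarrow> ks g \<subseteq> {1..2*m}"
  unfolding GW_def using ks_e_range by blast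

lemma G2_range: "g \<in> G2 \<Longrightarrow> ks g \<subseteq> {1..2*m}"
proof -
  assume "g \<in> G2"
  then obtain g1 h1 where gh: "g = g1 + h1" "g1 \<in> GW" "h1 \<in> GW" unfolding G2_def by blast
  then show ?thesis using GW_range[of g1] GW_range[of h1] keys_add_exp[of g1 h1] by auto
qed

lemma GW_single: assumes g: "g \<in> GW" shows "sg g c \<in> MIB (2*m) B GW"
  by (rule single_MIB[OF g _ GW_range[OF g]]) simp

lemma I_eq: "gen_ideal (poly_ring (2*m)) ((\<lambda>g. sg g (1::'k::field)) ` GW) = MIB (2*m) UNIV GW"
proof
  have "(\<lambda>g. sg g (1::'k)) ` GW \<subseteq> MIB (2*m) UNIV GW"
    using GW_single by blast
  then show "gen_ideal (poly_ring (2*m)) ((\<lambda>g. sg g (1::'k)) ` GW) \<subseteq> MIB (2*m) UNIV GW"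
    by (intro gen_ideal_least MIB_ideal)
next
  have sub: "(\<lambda>g. sg g (1::'k)) ` GW \<subseteq> poly_ring (2*m)"
  proof
    fix p :: "'k mpoly" assume "p \<in> (\<lambda>g. sg g 1) ` GW"
    then obtain g where g: "g \<in> GW" "p = sg g 1" by blast
    then show "p \<in> poly_ring (2*m)" using PR_single[OF GW_range[of g]] by simp
  qed
  show "MIB (2*m) UNIV GW \<subseteq> gen_ideal (poly_ring (2*m)) ((\<lambda>g. sg g (1::'k)) ` GW)"
  proof (rule MI_least[OF gen_ideal_ideal[OF sub]])
    fix g assume g: "g \<in> GW"
    have "sg g (1::'k) \<in> (\<lambda>g. sg g (1::'k)) ` GW" using g by blast
    then show "sg g (1::'k) \<in> gen_ideal (poly_ring (2*m)) ((\<lambda>g. sg g (1::'k)) ` GW)"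
      using gen_ideal_sup[of "(\<lambda>g. sg g (1::'k)) ` GW" "poly_ring (2*m)"] by blast
  qed
qed

lemma I2_eq:
  defines "I \<equiv> MIB (2*m) UNIV GW :: 'k::field mpoly set"
  shows "ideal_prod (poly_ring (2*m)) I I = MIB (2*m) UNIV G2"
proof
  have "{a * b |a b. a \<in> I \<and> b \<in> I} \<subseteq> MIB (2*m) UNIV G2"
  proof
    fix p assume "p \<in> {a * b |a b. a \<in> I \<and> b \<in> I}"
    then obtain a b where ab: "p = a * b" "a \<in> I" "b \<in> I" by blast
    have pS: "p \<in> poly_ring (2*m)" using ab PR_mult unfolding I_def MIB_def by blast
    have "\<exists>g\<in>G2. \<forall>k\<in>UNIV. lk g k \<le> lk c k" if c: "c \<in> ks p" for c
    proof -
      obtain x y where xy: "c = x + y" "x \<in> ks a" "y \<in> ks b" using keys_mult[of a b] c ab(1) by blast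
      obtain g where g: "g \<in> GW" "\<forall>k. lk g k \<le> lk x k" using xy(2) ab(2) unfolding I_def MIB_def by blast
      obtain h where h: "h \<in> GW" "\<forall>k. lk h k \<le> lk y k" using xy(3) ab(3) unfolding I_def MIB_def by blast
      have "g + h \<in> G2" unfolding G2_def using g h by blast
      moreover have "\<forall>k. lk (g + h) k \<le> lk c k" using g h xy(1) by (simp add: lookup_add add_mono)
      ultimately show ?thesis by blast
    qed
    then show "p \<in> MIB (2*m) UNIV G2" using pS unfolding MIB_def by blast
  qed
  then show "ideal_prod (poly_ring (2*m)) I I \<subseteq> MIB (2*m) UNIV G2"
    unfolding ideal_prod_def by (intro gen_ideal_least MIB_ideal)
next
  have sub: "{a * b |a b. a \<in> I \<and> b \<in> I} \<subseteq> poly_ring (2*m)"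
    unfolding I_def MIB_def using PR_mult by blast
  have J: "is_ideal (poly_ring (2*m)) (ideal_prod (poly_ring (2*m)) I I)"
    unfolding ideal_prod_def by (rule gen_ideal_ideal[OF sub])
  show "MIB (2*m) UNIV G2 \<subseteq> ideal_prod (poly_ring (2*m)) I I"
  proof (rule MI_least[OF J])
    fix gh assume "gh \<in> G2"
    then obtain g h where gh: "gh = g + h" "g \<in> GW" "h \<in> GW" unfolding G2_def by blast
    have "sg g (1::'k) \<in> I" "sg h (1::'k) \<in> I" unfolding I_def using GW_single gh by blast+
    moreover have "sg gh (1::'k) = sg g 1 * sg h 1" using gh(1) by (simp add: mult_single)
    ultimately have mem: "sg gh (1::'k) \<in> {a * b |a b. a \<in> I \<and> b \<in> I}"
      by (intro CollectI exI[of _ "sg g 1"] exI[of _ "sg h 1"]) simp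
    show "sg gh (1::'k) \<in> ideal_prod (poly_ring (2*m)) I I"
      unfolding ideal_prod_def by (rule subsetD[OF gen_ideal_sup mem])
  qed
qed

end

context wsetup begin

definition okC :: "(nat \<Rightarrow> nat) \<Rightarrow> nat set \<Rightarrow> bool" where
  "okC u C = (\<exists>x y x' y'. {x, y} \<in> W \<and> {x', y'} \<in> W \<and> (\<forall>k\<in>C. lk (e x y) k + lk (e x' y') k \<le> u k))"

definition Cs :: "nat set \<Rightarrow> nat set \<Rightarrow> nat set" where
  "Cs R K = (V - R) \<union> (\<lambda>i. m + i) ` (V - K)"

definition Nb :: "nat \<Rightarrow> nat set" where
  "Nb i = {l. {i, l} \<in> EH}"

lemma okI: "{x, y} \<in> W \<Longrightarrow> {x', y'} \<in> W \<Longrightarrow> (\<And>k. k \<in> C \<Longrightarrow> lk (e x y) k + lk (e x' y') k \<le> u k) \<Longrightarrow> okC u C"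
  unfolding okC_def by blast

lemma Cs_V: "i \<in> V \<Longrightarrow> i \<in> Cs R K \<longleftrightarrow> i \<notin> R"
  unfolding Cs_def by auto

lemma Cs_m: "i \<in> V \<Longrightarrow> m + i \<in> Cs R K \<longleftrightarrow> i \<notin> K"
  unfolding Cs_def by auto

lemma Cs_cases: "k \<in> Cs R K \<Longrightarrow> (k \<in> V \<and> k \<notin> R) \<or> (\<exists>i\<in>V. i \<notin> K \<and> k = m + i)"
  unfolding Cs_def by auto

lemma cond2_le: "cond2 \<Longrightarrow> {i, j} \<in> EH \<Longrightarrow> w i j \<le> w i (m + i)"
  unfolding cond2_def by fastforce

lemma E_V_bound:
  assumes c: cond2 and l: "l \<in> V" and xy: "{x, y} \<in> W"
  shows "lk (e x y) l \<le> w l (m + l)"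
proof -
  have xy': "{y, x} \<in> W" using W_sym[OF xy] .
  have neq: "x \<noteq> y" using W_neq[OF xy] .
  have A: "w l z \<le> w l (m + l)" if "{l, z} \<in> W" for z
    using W_V[OF that l] cond2_le[OF c, of l z] by auto
  show ?thesis
  proof (cases "l = x")
    case True
    then show ?thesis using A[of y] xy neq by (simp add: Ef)
  next
    case False
    show ?thesis
    proof (cases "l = y")
      case True
      then show ?thesis using A[of x] xy' False by (simp add: Ef)
    next
      case False2: False
      then show ?thesis using False by (simp add: Ef)
    qed
  qed
qed

lemma E_mi:
  assumes i: "i \<in> V" and xy: "{x, y} \<in> W" and pos: "0 < lk (e x y) (m + i)"
  shows "e x y = e i (m + i)"
proof -
  have "m + i = x \<or> m + i = y" using pos by (simp add: Ef split: if_splits)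
  then show ?thesis
  proof
    assume "m + i = x" then have "y = i" using W_m[OF xy i] by simp
    then show ?thesis using \<open>m + i = x\<close> e_sym by simp
  next
    assume "m + i = y" then have "x = i" using W_m[OF W_sym[OF xy] i] by simp
    then show ?thesis using \<open>m + i = y\<close> by simp
  qed
qed

lemma e_whisk:
  assumes "i \<in> V"
  shows "lk (e i (m + i)) i = w i (m + i)" "lk (e i (m + i)) (m + i) = w (m + i) i"
    "k \<noteq> i \<Longrightarrow> k \<noteq> m + i \<Longrightarrow> lk (e i (m + i)) k = 0"
  using assms by (auto simp: Ef)

lemma e_EH:
  assumes "{i, l} \<in> EH"
  shows "lk (e i l) i = w i l" "lk (e i l) l = w l i" "k \<noteq> i \<Longrightarrow> k \<noteq> l \<Longrightarrow> lk (e i l) k = 0"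
  using assms EH_edge[OF assms] by (auto simp: Ef)

end

context wsetup begin

lemma sigma_lemma:
  assumes c: cond2 and i: "i \<in> V" and l0: "{i, l0} \<in> EH" and xy: "{x, y} \<in> W"
  shows "\<exists>x' y'. {x', y'} \<in> W \<and> lk (e x' y') (m + i) = 0 \<and> (\<forall>k. k \<noteq> l0 \<longrightarrow> lk (e x' y') k \<le> lk (e x y) k)"
proof (cases "0 < lk (e x y) (m + i)")
  case True
  then have exy: "e x y = e i (m + i)" using E_mi[OF i xy] by blast
  have l0V: "l0 \<in> V" "i \<noteq> l0" using EH_edge[OF l0] by auto
  have "m + i \<noteq> i" "m + i \<noteq> l0" using i l0V by auto
  then have A: "lk (e i l0) (m + i) = 0" using e_EH(3)[OF l0] by blast
  have B: "lk (e i l0) k \<le> lk (e x y) k" if "k \<noteq> l0" for k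
  proof (cases "k = i")
    case True
    then show ?thesis using exy e_whisk(1)[OF i] e_EH(1)[OF l0] cond2_le[OF c l0] by simp
  next
    case False
    then show ?thesis using e_EH(3)[OF l0 False that] by simp
  qed
  show ?thesis using EH_W[OF l0] A B by blast
next
  case False
  then have "lk (e x y) (m + i) = 0" by simp
  then show ?thesis using xy by blast
qed

lemma L1:
  assumes c: cond2 and i: "i \<in> V" and l0R: "l0 \<in> R" and l0: "{i, l0} \<in> EH" and RV: "R \<subseteq> V"
    and ok1: "okC u (Cs R (K \<union> {i}))"
  shows "okC u (Cs R K)"
proof -
  obtain x1 y1 x2 y2 where p1: "{x1, y1} \<in> W" "{x2, y2} \<in> W"
    "\<forall>k\<in>Cs R (K \<union> {i}). lk (e x1 y1) k + lk (e x2 y2) k \<le> u k"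
    using ok1 unfolding okC_def by blast
  obtain a1 b1 where s1: "{a1, b1} \<in> W" "lk (e a1 b1) (m + i) = 0" "\<forall>k. k \<noteq> l0 \<longrightarrow> lk (e a1 b1) k \<le> lk (e x1 y1) k"
    using sigma_lemma[OF c i l0 p1(1)] by blast
  obtain a2 b2 where s2: "{a2, b2} \<in> W" "lk (e a2 b2) (m + i) = 0" "\<forall>k. k \<noteq> l0 \<longrightarrow> lk (e a2 b2) k \<le> lk (e x2 y2) k"
    using sigma_lemma[OF c i l0 p1(2)] by blast
  have l0V: "l0 \<in> V" using l0R RV by blast
  show ?thesis
  proof (rule okI[OF s1(1) s2(1)])
    fix k assume k: "k \<in> Cs R K"
    show "lk (e a1 b1) k + lk (e a2 b2) k \<le> u k"
    proof (cases "k = m + i")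
      case True then show ?thesis using s1(2) s2(2) by simp
    next
      case False
      have "l0 \<notin> Cs R K" using Cs_V[OF l0V] l0R by blast
      then have kl: "k \<noteq> l0" using k by blast
      have "k \<in> Cs R (K \<union> {i})" using k False unfolding Cs_def by auto
      then have "lk (e x1 y1) k + lk (e x2 y2) k \<le> u k" using p1(3) by blast
      moreover have "lk (e a1 b1) k \<le> lk (e x1 y1) k" "lk (e a2 b2) k \<le> lk (e x2 y2) k"
        using s1(3) s2(3) kl by blast+
      ultimately show ?thesis by linarith
    qed
  qed
qed

lemma e_pos_i:
  assumes i: "i \<in> V" and xy: "{x, y} \<in> W" and pos: "0 < lk (e x y) i"
  shows "e x y = e i (m + i) \<or> (\<exists>l\<in>Nb i. e x y = e i l)"
proof -
  have "i = x \<or> i = y" using pos by (simp add: Ef split: if_splits)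
  then show ?thesis
  proof
    assume ix: "i = x"
    have "y = m + i \<or> {i, y} \<in> EH" using W_V[of i y] xy ix i by simp
    then show ?thesis using ix unfolding Nb_def by auto
  next
    assume iy: "i = y"
    have "x = m + i \<or> {i, x} \<in> EH" using W_V[of i x] W_sym[OF xy] iy i by simp
    then show ?thesis using iy e_sym[of x y] unfolding Nb_def by auto
  qed
qed

lemma rho_lemma:
  assumes c: cond2 and i: "i \<in> V" and xy: "{x, y} \<in> W"
  shows "\<exists>x' y'. {x', y'} \<in> W \<and> (\<forall>k. k \<noteq> i \<longrightarrow> lk (e x' y') k \<le> lk (e x y) k) \<and>
     (\<forall>l\<in>Nb i. lk (e x' y') (m + l) = 0) \<and>
     (0 < lk (e x' y') i \<longrightarrow> (e x' y' = e i (m + i) \<and> e x y = e i (m + i)) \<or> (\<exists>l\<in>Nb i. e x' y' = e i l))"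
proof (cases "\<exists>l\<in>Nb i. 0 < lk (e x y) (m + l)")
  case True
  then obtain l where l: "l \<in> Nb i" "0 < lk (e x y) (m + l)" by blast
  have il: "{i, l} \<in> EH" using l(1) unfolding Nb_def by blast
  have lV: "l \<in> V" "i \<noteq> l" using EH_edge[OF il] by auto
  have exy: "e x y = e l (m + l)" using E_mi[OF lV(1) xy l(2)] .
  have li: "{l, i} \<in> EH" using il by (simp add: insert_commute)
  have A: "lk (e i l) k \<le> lk (e x y) k" if "k \<noteq> i" for k
  proof (cases "k = l")
    case True
    then show ?thesis using exy e_whisk(1)[OF lV(1)] e_EH(2)[OF il] cond2_le[OF c li] by simp
  next
    case False then show ?thesis using e_EH(3)[OF il that False] by simp
  qed
  have B: "lk (e i l) (m + l') = 0" if "l' \<in> Nb i" for l'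
  proof -
    have "l' \<in> V" using that EH_edge unfolding Nb_def by blast
    then have "m + l' \<noteq> i" "m + l' \<noteq> l" using i lV by auto
    then show ?thesis using e_EH(3)[OF il] by blast
  qed
  have C: "(e i l = e i (m + i) \<and> e x y = e i (m + i)) \<or> (\<exists>l'\<in>Nb i. e i l = e i l')" using l(1) by blast
  show ?thesis using EH_W[OF il] A B C by blast
next
  case False
  have B: "\<forall>l\<in>Nb i. lk (e x y) (m + l) = 0" using False by auto
  have C: "0 < lk (e x y) i \<longrightarrow> (e x y = e i (m + i) \<and> e x y = e i (m + i)) \<or> (\<exists>l\<in>Nb i. e x y = e i l)"
    using e_pos_i[OF i xy] by blast
  have A: "\<forall>k. k \<noteq> i \<longrightarrow> lk (e x y) k \<le> lk (e x y) k" by simp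
  have H: "{x, y} \<in> W \<and> (\<forall>k. k \<noteq> i \<longrightarrow> lk (e x y) k \<le> lk (e x y) k) \<and>
     (\<forall>l\<in>Nb i. lk (e x y) (m + l) = 0) \<and>
     (0 < lk (e x y) i \<longrightarrow> (e x y = e i (m + i) \<and> e x y = e i (m + i)) \<or> (\<exists>l\<in>Nb i. e x y = e i l))"
    using xy A B C by (intro conjI)
  show ?thesis by (rule exI[of _ x], rule exI[of _ y], rule H)
qed

lemma F_lemma:
  assumes c: cond2 and i: "i \<in> V" and ls: "ls \<in> Nb i" and X: "{xX, yX} \<in> W"
    and ui: "w i (m + i) + lk (e xX yX) i \<le> u i"
    and uX: "\<forall>k\<in>C. k \<noteq> i \<longrightarrow> lk (e xX yX) k \<le> u k"
    and ul: "w ls i + lk (e xX yX) ls \<le> u ls"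
  shows "okC u C"
proof -
  have il: "{i, ls} \<in> EH" using ls unfolding Nb_def by blast
  show ?thesis
  proof (rule okI[OF EH_W[OF il] X])
    fix k assume k: "k \<in> C"
    show "lk (e i ls) k + lk (e xX yX) k \<le> u k"
    proof (cases "k = i")
      case True then show ?thesis using e_EH(1)[OF il] cond2_le[OF c il] ui by simp
    next
      case False
      show ?thesis
      proof (cases "k = ls")
        case True then show ?thesis using e_EH(2)[OF il] ul by simp
      next
        case False2: False
        then show ?thesis using e_EH(3)[OF il False False2] uX k False by simp
      qed
    qed
  qed
qed

end

context wsetup begin

lemma L2:
  assumes c: cond2 and RV: "R \<subseteq> V" and KV: "K \<subseteq> V" and i: "i \<in> V" and iR: "i \<notin> R" and iK: "i \<notin> K"
    and nR: "\<forall>l. {i, l} \<in> EH \<longrightarrow> l \<notin> R"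
    and ok1: "okC u (Cs R (K \<union> {i}))" and ok2: "okC u (Cs (R \<union> {i}) (K \<union> Nb i))"
  shows "okC u (Cs R K)"
proof -
  let ?C = "Cs R K" let ?C1 = "Cs R (K \<union> {i})" let ?C2 = "Cs (R \<union> {i}) (K \<union> Nb i)"
  let ?p = "w i (m + i)" let ?q = "w (m + i) i"
  have NbV: "l \<in> V \<and> l \<noteq> i \<and> {i, l} \<in> EH" if "l \<in> Nb i" for l
    using that EH_edge unfolding Nb_def by blast
  have iNb: "i \<notin> Nb i" using NbV by blast
  have sub1: "k \<in> ?C1" if "k \<in> ?C" "k \<noteq> m + i" for k using that unfolding Cs_def by auto
  have sub2: "k \<in> ?C2" if "k \<in> ?C" "k \<noteq> i" "k \<notin> (\<lambda>l. m + l) ` Nb i" for k using that unfolding Cs_def by auto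
  have iC: "i \<in> ?C" "i \<in> ?C1" using Cs_V[OF i] iR by auto
  have miC: "m + i \<in> ?C" "m + i \<in> ?C2" using Cs_m[OF i] iK iNb by auto
  have lC: "l \<in> ?C" if "l \<in> Nb i" for l
  proof -
    have "l \<in> V" "l \<notin> R" using NbV[OF that] nR by auto
    then show ?thesis using Cs_V by blast
  qed
  obtain x1 y1 x2 y2 where p1: "{x1, y1} \<in> W" "{x2, y2} \<in> W"
    "\<forall>k\<in>?C1. lk (e x1 y1) k + lk (e x2 y2) k \<le> u k"
    using ok1 unfolding okC_def by blast
  obtain x3 y3 x4 y4 where p2: "{x3, y3} \<in> W" "{x4, y4} \<in> W"
    "\<forall>k\<in>?C2. lk (e x3 y3) k + lk (e x4 y4) k \<le> u k"
    using ok2 unfolding okC_def by blast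
  obtain a3 b3 where r3: "{a3, b3} \<in> W" "\<forall>k. k \<noteq> i \<longrightarrow> lk (e a3 b3) k \<le> lk (e x3 y3) k"
    "\<forall>l\<in>Nb i. lk (e a3 b3) (m + l) = 0"
    "0 < lk (e a3 b3) i \<longrightarrow> (e a3 b3 = e i (m + i) \<and> e x3 y3 = e i (m + i)) \<or> (\<exists>l\<in>Nb i. e a3 b3 = e i l)"
    using rho_lemma[OF c i p2(1)] by metis
  obtain a4 b4 where r4: "{a4, b4} \<in> W" "\<forall>k. k \<noteq> i \<longrightarrow> lk (e a4 b4) k \<le> lk (e x4 y4) k"
    "\<forall>l\<in>Nb i. lk (e a4 b4) (m + l) = 0"
    "0 < lk (e a4 b4) i \<longrightarrow> (e a4 b4 = e i (m + i) \<and> e x4 y4 = e i (m + i)) \<or> (\<exists>l\<in>Nb i. e a4 b4 = e i l)"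
    using rho_lemma[OF c i p2(2)] by metis
  have rhoC: "lk (e a3 b3) k + lk (e a4 b4) k \<le> u k" if k: "k \<in> ?C" "k \<noteq> i" for k
  proof (cases "k \<in> (\<lambda>l. m + l) ` Nb i")
    case True
    then obtain l where "l \<in> Nb i" "k = m + l" by blast
    then show ?thesis using r3(3) r4(3) by simp
  next
    case False
    then have "k \<in> ?C2" using sub2 k by blast
    then have "lk (e x3 y3) k + lk (e x4 y4) k \<le> u k" using p2(3) by blast
    moreover have "lk (e a3 b3) k \<le> lk (e x3 y3) k" "lk (e a4 b4) k \<le> lk (e x4 y4) k"
      using r3(2) r4(2) k(2) by blast+
    ultimately show ?thesis by linarith
  qed
  have rhoOK: "okC u ?C" if H: "lk (e a3 b3) i + lk (e a4 b4) i \<le> u i"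
  proof (rule okI[OF r3(1) r4(1)])
    fix k assume "k \<in> ?C"
    then show "lk (e a3 b3) k + lk (e a4 b4) k \<le> u k" using rhoC H by (cases "k = i") auto
  qed
  have bi3: "lk (e a3 b3) i \<le> ?p" using E_V_bound[OF c i r3(1)] .
  have bi4: "lk (e a4 b4) i \<le> ?p" using E_V_bound[OF c i r4(1)] .
  have B2: "okC u ?C" if X1: "{xX, yX} \<in> W" and X2: "lk (e xX yX) (m + i) = 0"
    and X3: "?p + lk (e xX yX) i \<le> u i" and X4: "u (m + i) < ?q"
    and X5: "\<forall>k\<in>?C. k \<noteq> i \<longrightarrow> lk (e xX yX) k \<le> u k" for xX yX
  proof (cases "lk (e a3 b3) i + lk (e a4 b4) i \<le> u i")
    case True then show ?thesis using rhoOK by blast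
  next
    case False
    have ui: "?p \<le> u i" using X3 by linarith
    have pos3: "0 < lk (e a3 b3) i" using False bi4 ui by linarith
    have pos4: "0 < lk (e a4 b4) i" using False bi3 ui by linarith
    have notW3: "e x3 y3 \<noteq> e i (m + i)"
    proof
      assume "e x3 y3 = e i (m + i)"
      then have "lk (e x3 y3) (m + i) = ?q" using e_whisk(2)[OF i] by simp
      then have "?q \<le> u (m + i)" using p2(3) miC(2) by fastforce
      then show False using X4 by linarith
    qed
    have notW4: "e x4 y4 \<noteq> e i (m + i)"
    proof
      assume "e x4 y4 = e i (m + i)"
      then have "lk (e x4 y4) (m + i) = ?q" using e_whisk(2)[OF i] by simp
      then have "?q \<le> u (m + i)" using p2(3) miC(2) by fastforce
      then show False using X4 by linarith
    qed
    obtain l where l: "l \<in> Nb i" "e a3 b3 = e i l" using r3(4) pos3 notW3 by blast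
    obtain l' where l': "l' \<in> Nb i" "e a4 b4 = e i l'" using r4(4) pos4 notW4 by blast
    have il: "{i, l} \<in> EH" and il': "{i, l'} \<in> EH" using l(1) l'(1) unfolding Nb_def by auto
    have lV: "l \<in> V" "l \<noteq> i" and lV': "l' \<in> V" "l' \<noteq> i" using NbV l(1) l'(1) by auto
    have atl: "w l i + lk (e i l') l \<le> u l" using rhoC[OF lC[OF l(1)] lV(2)] l(2) l'(2) e_EH(2)[OF il] by simp
    have atl': "lk (e i l) l' + w l' i \<le> u l'" using rhoC[OF lC[OF l'(1)] lV'(2)] l(2) l'(2) e_EH(2)[OF il'] by simp
    show ?thesis
    proof (cases "l = l'")
      case True
      have ul: "2 * w l i \<le> u l" using atl True e_EH(2)[OF il] by simp
      have "u i < w i l + w i l'" using False l(2) l'(2) e_EH(1)[OF il] e_EH(1)[OF il'] by simp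
      then have "u i < 2 * w i l" using True by simp
      then have "\<not> (2 * w i l \<le> ?p)" using ui by linarith
      then have eqs: "?p = w i l" "w l (m + l) = w l i" using c il unfolding cond2_def by blast+
      have "lk (e xX yX) l \<le> w l (m + l)" using E_V_bound[OF c lV(1) X1] .
      then have "w l i + lk (e xX yX) l \<le> u l" using ul eqs by linarith
      then show ?thesis using F_lemma[OF c i l(1) X1 X3 X5] by blast
    next
      case False3: False
      have notboth: "\<not> (0 < lk (e xX yX) l \<and> 0 < lk (e xX yX) l')"
      proof
        assume both: "0 < lk (e xX yX) l \<and> 0 < lk (e xX yX) l'"
        then have "l \<in> {xX, yX}" "l' \<in> {xX, yX}" by (auto simp: Ef split: if_splits)
        then have "{xX, yX} = {l, l'}" using False3 by auto
        then have ll: "{l, l'} \<in> W" using X1 by simp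
        have "{l, i} \<in> W" "{i, l'} \<in> W" using EH_W[OF il] EH_W[OF il'] by (auto simp: insert_commute)
        then show False using tri_free ll lV lV' False3 unfolding triangle_free_def by blast
      qed
      then have "\<not> 0 < lk (e xX yX) l \<or> \<not> 0 < lk (e xX yX) l'" by metis
      then show ?thesis
      proof
        assume "\<not> 0 < lk (e xX yX) l"
        then have "w l i + lk (e xX yX) l \<le> u l" using atl by simp
        then show ?thesis using F_lemma[OF c i l(1) X1 X3 X5] by blast
      next
        assume "\<not> 0 < lk (e xX yX) l'"
        then have "w l' i + lk (e xX yX) l' \<le> u l'" using atl' by simp
        then show ?thesis using F_lemma[OF c i l'(1) X1 X3 X5] by blast
      qed
    qed
  qed
  show ?thesis
  proof (cases "lk (e x1 y1) (m + i) + lk (e x2 y2) (m + i) \<le> u (m + i)")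
    case True
    show ?thesis
    proof (rule okI[OF p1(1) p1(2)])
      fix k assume k: "k \<in> ?C"
      show "lk (e x1 y1) k + lk (e x2 y2) k \<le> u k"
      proof (cases "k = m + i")
        case True2: True
        then show ?thesis using True by simp
      next
        case False
        then show ?thesis using p1(3) sub1[OF k] by blast
      qed
    qed
  next
    case False
    show ?thesis
    proof (cases "0 < lk (e x1 y1) (m + i) \<and> 0 < lk (e x2 y2) (m + i)")
      case True
      have "e x1 y1 = e i (m + i)" "e x2 y2 = e i (m + i)" using E_mi[OF i p1(1)] E_mi[OF i p1(2)] True by auto
      then have "?p + ?p \<le> u i" using p1(3) iC(2) e_whisk(1)[OF i] by fastforce
      then show ?thesis using rhoOK bi3 bi4 by linarith
    next
      case False2: False
      show ?thesis
      proof (cases "0 < lk (e x1 y1) (m + i)")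
        case True
        have z2: "lk (e x2 y2) (m + i) = 0" using True False2 by simp
        have w1: "e x1 y1 = e i (m + i)" using E_mi[OF i p1(1) True] .
        have X3: "?p + lk (e x2 y2) i \<le> u i" using p1(3) iC(2) w1 e_whisk(1)[OF i] by fastforce
        have X4: "u (m + i) < ?q" using False z2 w1 e_whisk(2)[OF i] by simp
        have X5: "\<forall>k\<in>?C. k \<noteq> i \<longrightarrow> lk (e x2 y2) k \<le> u k"
        proof (intro ballI impI)
          fix k assume k: "k \<in> ?C" "k \<noteq> i"
          show "lk (e x2 y2) k \<le> u k"
          proof (cases "k = m + i")
            case True then show ?thesis using z2 by simp
          next
            case False
            then have "lk (e x1 y1) k + lk (e x2 y2) k \<le> u k" using p1(3) sub1[OF k(1)] by blast
            then show ?thesis by linarith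
          qed
        qed
        show ?thesis using B2[OF p1(2) z2 X3 X4 X5] .
      next
        case False4: False
        have z1: "lk (e x1 y1) (m + i) = 0" using False4 by simp
        have True4: "0 < lk (e x2 y2) (m + i)" using False z1 by simp
        have w2: "e x2 y2 = e i (m + i)" using E_mi[OF i p1(2) True4] .
        have X3: "?p + lk (e x1 y1) i \<le> u i" using p1(3) iC(2) w2 e_whisk(1)[OF i] by fastforce
        have X4: "u (m + i) < ?q" using False z1 w2 e_whisk(2)[OF i] by simp
        have X5: "\<forall>k\<in>?C. k \<noteq> i \<longrightarrow> lk (e x1 y1) k \<le> u k"
        proof (intro ballI impI)
          fix k assume k: "k \<in> ?C" "k \<noteq> i"
          show "lk (e x1 y1) k \<le> u k"
          proof (cases "k = m + i")
            case True then show ?thesis using z1 by simp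
          next
            case False
            then have "lk (e x1 y1) k + lk (e x2 y2) k \<le> u k" using p1(3) sub1[OF k(1)] by blast
            then show ?thesis by linarith
          qed
        qed
        show ?thesis using B2[OF p1(1) z1 X3 X4 X5] .
      qed
    qed
  qed
qed

end

context wsetup begin

definition coverH :: "nat set \<Rightarrow> bool" where
  "coverH T = (\<forall>x y. {x, y} \<in> EH \<longrightarrow> x \<in> T \<or> y \<in> T)"

lemma states_ind_aux:
  assumes c: cond2 and allT: "\<And>T. T \<subseteq> V \<Longrightarrow> coverH T \<Longrightarrow> okC u (Cs (V - T) T)"
    and VVd: "VV = V"
  shows "\<forall>R K. card (VV - R - K) = N \<longrightarrow> R \<subseteq> VV \<longrightarrow> K \<subseteq> VV \<longrightarrow> R \<inter> K = {} \<longrightarrow>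
           (\<forall>r\<in>R. \<forall>l. {r, l} \<in> EH \<longrightarrow> l \<in> K) \<longrightarrow> okC u (Cs R K)"
proof (induction N rule: less_induct)
  case (less N)
  have finV: "finite VV" using VVd by simp
  have inV: "x \<in> V" if "x \<in> VV" for x using that VVd by simp
  have EHV: "x \<in> VV" if "{x, y} \<in> EH" for x y using EH_edge[OF that] VVd by simp
  show ?case
  proof (intro allI impI)
    fix R K assume N: "card (VV - R - K) = N" and RV: "R \<subseteq> VV" and KV: "K \<subseteq> VV" and RK: "R \<inter> K = {}"
      and inv: "\<forall>r\<in>R. \<forall>l. {r, l} \<in> EH \<longrightarrow> l \<in> K"
    have IH: "okC u (Cs R' K')" if "card (VV - R' - K') < N" "R' \<subseteq> VV" "K' \<subseteq> VV" "R' \<inter> K' = {}"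
      "\<forall>r\<in>R'. \<forall>l. {r, l} \<in> EH \<longrightarrow> l \<in> K'" for R' K'
      using less.IH[OF that(1)] that(2-5) by blast
    have RV': "R \<subseteq> V" and KV': "K \<subseteq> V" using RV KV VVd by simp_all
    show "okC u (Cs R K)"
    proof (cases "VV - R - K = {}")
      case True
      have VT: "VV - K = R" using True RV RK by blast
      have cov: "coverH K" unfolding coverH_def
      proof (intro allI impI)
        fix x y assume xy: "{x, y} \<in> EH"
        have xV: "x \<in> VV" using EHV[OF xy] .
        show "x \<in> K \<or> y \<in> K"
        proof (cases "x \<in> K")
          case False
          then have xR: "x \<in> R" using VT xV by blast
          have "\<forall>l. {x, l} \<in> EH \<longrightarrow> l \<in> K" using bspec[OF inv xR] .
          then show ?thesis using xy by simp
        qed simp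
      qed
      have "V - K = R" using VT VVd by simp
      then show ?thesis using allT[OF KV' cov] by simp
    next
      case False
      then obtain i where "i \<in> VV - R - K" by (meson ex_in_conv)
      then have i: "i \<in> VV" "i \<notin> R" "i \<notin> K" by simp_all
      have iV: "i \<in> V" using inV[OF i(1)] .
      have fin: "finite (VV - R - K)" using finV by simp
      have "VV - R - (K \<union> {i}) = VV - R - K - {i}" by blast
      moreover have "card (VV - R - K - {i}) < card (VV - R - K)"
        using fin i by (intro card_Diff1_less) simp_all
      ultimately have c1: "card (VV - R - (K \<union> {i})) < N" using N by simp
      have inv1: "\<forall>r\<in>R. \<forall>l. {r, l} \<in> EH \<longrightarrow> l \<in> K \<union> {i}"
      proof (intro ballI allI impI)
        fix r l assume "r \<in> R" "{r, l} \<in> EH"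
        then show "l \<in> K \<union> {i}" using inv by simp
      qed
      have KiV: "K \<union> {i} \<subseteq> VV" using KV i(1) by simp
      have RKi: "R \<inter> (K \<union> {i}) = {}" using RK i(2) by simp
      have ok1: "okC u (Cs R (K \<union> {i}))"
        using IH[OF c1 RV KiV RKi inv1] .
      show ?thesis
      proof (cases "\<exists>l0\<in>R. {i, l0} \<in> EH")
        case True
        then obtain l0 where l0: "l0 \<in> R" "{i, l0} \<in> EH" by (meson bexE)
        show ?thesis using L1[OF c iV l0(1) l0(2) RV' ok1] .
      next
        case False
        have NbV: "Nb i \<subseteq> VV"
        proof
          fix l assume "l \<in> Nb i"
          then have "{i, l} \<in> EH" by (simp add: Nb_def)
          then have "{l, i} \<in> EH" by (simp add: insert_commute)
          then show "l \<in> VV" by (rule EHV)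
        qed
        have "{i, i} \<notin> EH" using EH_edge[of i i] by blast
        then have iNb: "i \<notin> Nb i" unfolding Nb_def by simp
        have "VV - (R \<union> {i}) - (K \<union> Nb i) \<subseteq> VV - R - K - {i}" by blast
        then have "card (VV - (R \<union> {i}) - (K \<union> Nb i)) \<le> card (VV - R - K - {i})"
          using fin by (intro card_mono) simp_all
        moreover have "card (VV - R - K - {i}) < card (VV - R - K)"
          using fin i by (intro card_Diff1_less) simp_all
        ultimately have c2: "card (VV - (R \<union> {i}) - (K \<union> Nb i)) < N" using N by simp
        have RN: "R \<inter> Nb i = {}" using False unfolding Nb_def by blast
        have disj: "(R \<union> {i}) \<inter> (K \<union> Nb i) = {}" using RN RK i iNb by blast
        have inv2: "\<forall>r\<in>R \<union> {i}. \<forall>l. {r, l} \<in> EH \<longrightarrow> l \<in> K \<union> Nb i"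
        proof (intro ballI allI impI)
          fix r l assume r: "r \<in> R \<union> {i}" and rl: "{r, l} \<in> EH"
          show "l \<in> K \<union> Nb i"
          proof (cases "r = i")
            case True then show ?thesis using rl unfolding Nb_def by simp
          next
            case False then have "r \<in> R" using r by simp
            then show ?thesis using inv rl by simp
          qed
        qed
        have s1: "R \<union> {i} \<subseteq> VV" using RV i(1) by simp
        have s2: "K \<union> Nb i \<subseteq> VV" using KV NbV by simp
        have ok2: "okC u (Cs (R \<union> {i}) (K \<union> Nb i))" using IH[OF c2 s1 s2 disj inv2] .
        have nR: "\<forall>l. {i, l} \<in> EH \<longrightarrow> l \<notin> R" using False by blast
        show ?thesis using L2[OF c RV' KV' iV i(2) i(3) nR ok1 ok2] .
      qed
    qed
  qed
qed

lemma states_ind: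
  assumes c: cond2 and allT: "\<And>T. T \<subseteq> V \<Longrightarrow> coverH T \<Longrightarrow> okC u (Cs (V - T) T)"
  shows "okC u (Cs {} {})"
proof -
  obtain VV where VVd: "VV = V" by blast
  have "card (VV - {} - {}) = card VV" by simp
  then show ?thesis using states_ind_aux[OF c allT VVd, of "card VV"] by simp
qed

lemma Cs_empty: "Cs {} {} = {1..2*m}"
proof
  show "Cs {} {} \<subseteq> {1..2*m}" unfolding Cs_def by auto
  show "{1..2*m} \<subseteq> Cs {} {}"
  proof
    fix k assume k: "k \<in> {1..2*m}"
    show "k \<in> Cs {} {}"
    proof (cases "k \<le> m")
      case True then show ?thesis using k unfolding Cs_def by auto
    next
      case False
      then have "k - m \<in> V" "k = m + (k - m)" using k by auto
      then show ?thesis unfolding Cs_def by blast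
    qed
  qed
qed

lemma comb_main:
  assumes c: cond2 and allT: "\<And>T. T \<subseteq> V \<Longrightarrow> coverH T \<Longrightarrow> okC u (Cs (V - T) T)"
  shows "okC u {1..2*m}"
  using states_ind[OF c allT] Cs_empty by simp

end

context wsetup begin

lemma Cs_finite: "finite (Cs R K)"
  unfolding Cs_def by simp

lemma CT_V: "k \<in> V \<Longrightarrow> T \<subseteq> V \<Longrightarrow> k \<in> Cs (V - T) T \<longleftrightarrow> k \<in> T"
  using Cs_V[of k "V - T" T] by auto

lemma CT_m: "i \<in> V \<Longrightarrow> m + i \<in> Cs (V - T) T \<longleftrightarrow> i \<notin> T"
  using Cs_m by blast

lemma CT_range: "Cs R K \<subseteq> {1..2*m}"
  unfolding Cs_def by auto

lemma CT_cover:
  assumes T: "T \<subseteq> V" "coverH T" and xy: "{x, y} \<in> W"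
  shows "x \<in> Cs (V - T) T \<or> y \<in> Cs (V - T) T"
  using xy
proof (cases rule: W_cases)
  case 1
  then have "x \<in> T \<or> y \<in> T" using T(2) unfolding coverH_def by blast
  then show ?thesis using CT_V[OF 1(3) T(1)] CT_V[OF 1(4) T(1)] by blast
next
  case (2 i)
  then show ?thesis using CT_V[OF 2(1) T(1)] CT_m[OF 2(1), of T] by blast
next
  case (3 i)
  then show ?thesis using CT_V[OF 3(1) T(1)] CT_m[OF 3(1), of T] by blast
qed

lemma CT_out:
  assumes T: "T \<subseteq> V" and k: "k \<in> Cs (V - T) T"
  shows "\<exists>l. {k, l} \<in> W \<and> l \<notin> Cs (V - T) T"
proof -
  have "(k \<in> V \<and> k \<notin> V - T) \<or> (\<exists>i\<in>V. i \<notin> T \<and> k = m + i)" using Cs_cases[OF k] .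
  then show ?thesis
  proof
    assume a: "k \<in> V \<and> k \<notin> V - T"
    then have "k \<in> T" by blast
    then have "m + k \<notin> Cs (V - T) T" using CT_m a by blast
    moreover have "{k, m + k} \<in> W" using whisk_W a by blast
    ultimately show ?thesis by blast
  next
    assume "\<exists>i\<in>V. i \<notin> T \<and> k = m + i"
    then obtain i where i: "i \<in> V" "i \<notin> T" "k = m + i" by blast
    then have "i \<notin> Cs (V - T) T" using CT_V[OF i(1) T] by blast
    moreover have "{k, i} \<in> W" using whisk_W[OF i(1)] i(3) by (simp add: insert_commute)
    ultimately show ?thesis by blast
  qed
qed

lemma var_notin_PB:
  assumes "l \<notin> B" shows "(var l :: 'k::field mpoly) \<notin> PB n B"
proof
  assume "(var l :: 'k mpoly) \<in> PB n B"
  then obtain k where "k \<in> B" "lk (sg l (1::nat)) k \<noteq> 0" unfolding PB_def var_def by auto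
  then show False using assms by (auto simp: lookup_single when_def split: if_splits)
qed

lemma minprime_CT:
  fixes I :: "'k::field mpoly set"
  defines "I \<equiv> MIB (2*m) UNIV GW"
  assumes T: "T \<subseteq> V" "coverH T"
  shows "PB (2*m) (Cs (V - T) T) \<in> min_primes (poly_ring (2*m)) I"
proof -
  let ?C = "Cs (V - T) T"
  let ?P = "PB (2*m) ?C :: 'k mpoly set"
  have prime: "is_prime_ideal (poly_ring (2*m)) ?P" by (rule PB_prime[OF Cs_finite])
  have IP: "I \<subseteq> ?P"
  proof
    fix f assume f: "f \<in> I"
    have "\<exists>k\<in>?C. lk a k \<noteq> 0" if a: "a \<in> ks f" for a
    proof -
      obtain g where g: "g \<in> GW" "\<forall>k. lk g k \<le> lk a k" using f a unfolding I_def MIB_def by blast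
      obtain x y where xy: "g = e x y" "{x, y} \<in> W" using g(1) unfolding GW_def by blast
      have "x \<in> ?C \<or> y \<in> ?C" using CT_cover[OF T xy(2)] .
      moreover have "1 \<le> lk g x" "1 \<le> lk g y" using xy wpos[OF xy(2)] wpos[OF W_sym[OF xy(2)]] W_neq[OF xy(2)]
        by (simp_all add: Ef)
      ultimately show ?thesis using g(2) by (metis le_trans not_one_le_zero)
    qed
    then show "f \<in> ?P" using f unfolding I_def MIB_def PB_def by blast
  qed
  have minimal: "Q = ?P" if Q: "is_prime_ideal (poly_ring (2*m)) Q" "I \<subseteq> Q" "Q \<subseteq> ?P" for Q
  proof
    show "Q \<subseteq> ?P" using Q(3) .
    have Qid: "is_ideal (poly_ring (2*m)) Q" using Q(1) unfolding is_prime_ideal_def by blast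
    have varQ: "var k \<in> Q" if k: "k \<in> ?C" for k
    proof -
      obtain l where l: "{k, l} \<in> W" "l \<notin> ?C" using CT_out[OF T(1) k] by blast
      have "sg (e k l) (1::'k) \<in> I" unfolding I_def by (rule GW_single) (use l(1) GW_def in blast)
      then have "sg (e k l) (1::'k) \<in> Q" using Q(2) by blast
      then obtain z where z: "z \<in> ks (e k l)" "var z \<in> Q" using mon_prime_var[OF Q(1) ks_e_range[OF l(1)]] by blast
      have "z = k \<or> z = l" using z(1) ks_e[OF l(1)] by simp
      moreover have "var l \<notin> Q" using var_notin_PB[OF l(2)] Q(3) by blast
      ultimately show ?thesis using z(2) by blast
    qed
    show "?P \<subseteq> Q" unfolding PB_MI
    proof (rule MI_least[OF Qid])
      fix g assume "g \<in> units ?C"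
      then obtain k where "k \<in> ?C" "g = sg k 1" unfolding units_def by blast
      then show "sg g (1::'k) \<in> Q" using varQ unfolding var_def by blast
    qed
  qed
  show ?thesis unfolding min_primes_def using prime IP minimal by blast
qed

lemma MIB_mono: "MIB n UNIV G \<subseteq> MIB n B G"
  unfolding MIB_def by blast

lemma symb_sub:
  fixes I :: "'k::field mpoly set"
  defines "I \<equiv> MIB (2*m) UNIV GW"
  assumes c: cond2
  shows "symb_power2 (poly_ring (2*m)) I \<subseteq> MIB (2*m) UNIV G2"
proof
  fix f assume f: "f \<in> symb_power2 (poly_ring (2*m)) I"
  have fS: "f \<in> poly_ring (2*m)" using f unfolding symb_power2_def by blast
  have fP: "\<exists>s\<in>poly_ring (2*m) - P. s * f \<in> MIB (2*m) UNIV G2" if "P \<in> min_primes (poly_ring (2*m)) I" for P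
    using f that I2_eq[where 'k='k] unfolding symb_power2_def I_def by blast
  have "\<exists>g\<in>G2. \<forall>k\<in>UNIV. lk g k \<le> lk a k" if a: "a \<in> ks f" for a
  proof -
    have allT: "okC (lk a) (Cs (V - T) T)" if T: "T \<subseteq> V" "coverH T" for T
    proof -
      let ?C = "Cs (V - T) T"
      obtain s where s: "s \<in> poly_ring (2*m)" "s \<notin> PB (2*m) ?C" "s * f \<in> MIB (2*m) UNIV G2"
        using fP[OF minprime_CT[OF T, where 'k='k, folded I_def]] by blast
      have "\<exists>x\<in>ks s. \<forall>k\<in>?C. lk x k = 0" using s(1,2) unfolding PB_def by blast
      moreover have "s * f \<in> MIB (2*m) ?C G2" using s(3) MIB_mono by blast
      ultimately have "f \<in> MIB (2*m) ?C G2" using loc[OF Cs_finite s(1) fS] by blast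
      then obtain g where g: "g \<in> G2" "\<forall>k\<in>?C. lk g k \<le> lk a k" using a unfolding MIB_def by blast
      then obtain g1 g2 where gg: "g = g1 + g2" "g1 \<in> GW" "g2 \<in> GW" unfolding G2_def by blast
      obtain x y where xy: "g1 = e x y" "{x, y} \<in> W" using gg(2) unfolding GW_def by blast
      obtain x' y' where xy': "g2 = e x' y'" "{x', y'} \<in> W" using gg(3) unfolding GW_def by blast
      show ?thesis unfolding okC_def using xy xy' g(2) gg(1) by (auto simp: lookup_add)
    qed
    have "okC (lk a) {1..2*m}" using comb_main[OF c allT] by blast
    then obtain x y x' y' where xy: "{x, y} \<in> W" "{x', y'} \<in> W"
      "\<forall>k\<in>{1..2*m}. lk (e x y) k + lk (e x' y') k \<le> lk a k" unfolding okC_def by blast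
    let ?g = "e x y + e x' y'"
    have gG: "?g \<in> G2" unfolding G2_def GW_def using xy(1,2) by blast
    have "lk ?g k \<le> lk a k" for k
    proof (cases "k \<in> {1..2*m}")
      case True then show ?thesis using xy(3) by (simp add: lookup_add)
    next
      case False
      then have "k \<notin> ks ?g" using G2_range[OF gG] by blast
      then show ?thesis by (simp add: in_keys_iff)
    qed
    then show ?thesis using gG by blast
  qed
  then show "f \<in> MIB (2*m) UNIV G2" using fS unfolding MIB_def by blast
qed

lemma I2_sub_symb:
  fixes I :: "'k::field mpoly set"
  defines "I \<equiv> MIB (2*m) UNIV GW"
  shows "MIB (2*m) UNIV G2 \<subseteq> symb_power2 (poly_ring (2*m)) I"
proof
  fix f :: "'k mpoly" assume f: "f \<in> MIB (2*m) UNIV G2"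
  have fS: "f \<in> poly_ring (2*m)" using f unfolding MIB_def by blast
  have "\<exists>s\<in>poly_ring (2*m) - P. s * f \<in> ideal_prod (poly_ring (2*m)) I I" if P: "P \<in> min_primes (poly_ring (2*m)) I" for P
  proof -
    have Pp: "is_prime_ideal (poly_ring (2*m)) P" using P unfolding min_primes_def by blast
    have "(1::'k mpoly) \<notin> P"
    proof
      assume "(1::'k mpoly) \<in> P"
      then have "P = poly_ring (2*m)" using ideal_one Pp unfolding is_prime_ideal_def by blast
      then show False using Pp unfolding is_prime_ideal_def by blast
    qed
    moreover have "1 * f \<in> ideal_prod (poly_ring (2*m)) I I" using f I2_eq[where 'k='k] unfolding I_def by simp
    ultimately show ?thesis using PR_one by blast
  qed
  then show "f \<in> symb_power2 (poly_ring (2*m)) I" unfolding symb_power2_def using fS by blast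
qed

end

context wsetup begin

lemma minprime_cover:
  fixes I :: "'k::field mpoly set"
  defines "I \<equiv> MIB (2*m) UNIV GW"
  assumes P: "P \<in> min_primes (poly_ring (2*m)) I" and xy: "{x, y} \<in> W"
  shows "var x \<in> P \<or> var y \<in> P"
proof -
  have Pp: "is_prime_ideal (poly_ring (2*m)) P" and IP: "I \<subseteq> P" using P unfolding min_primes_def by blast+
  have "sg (e x y) (1::'k) \<in> I" unfolding I_def by (rule GW_single) (use xy GW_def in blast)
  then have "sg (e x y) (1::'k) \<in> P" using IP by blast
  then obtain z where z: "z \<in> ks (e x y)" "var z \<in> P" using mon_prime_var[OF Pp ks_e_range[OF xy]] by blast
  then show ?thesis using ks_e[OF xy] by auto
qed

lemma var_range: "k \<in> {1..n} \<Longrightarrow> (var k :: 'k::field mpoly) \<in> poly_ring n"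
  unfolding var_def by (rule PR_single) simp

lemma minprime_notboth:
  fixes I :: "'k::field mpoly set"
  defines "I \<equiv> MIB (2*m) UNIV GW"
  assumes P: "P \<in> min_primes (poly_ring (2*m)) I" and i: "i \<in> V"
  shows "\<not> (var i \<in> P \<and> var (m + i) \<in> P)"
proof
  assume both: "var i \<in> P \<and> var (m + i) \<in> P"
  have Pp: "is_prime_ideal (poly_ring (2*m)) P" and IP: "I \<subseteq> P"
    and Pmin: "\<And>Q. is_prime_ideal (poly_ring (2*m)) Q \<and> I \<subseteq> Q \<and> Q \<subseteq> P \<longrightarrow> Q = P"
    using P unfolding min_primes_def by blast+
  define CP where "CP = {k \<in> {1..2*m}. var k \<in> P} - {m + i}"
  let ?Q = "PB (2*m) CP :: 'k mpoly set"
  have finCP: "finite CP" unfolding CP_def by simp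
  have Qp: "is_prime_ideal (poly_ring (2*m)) ?Q" by (rule PB_prime[OF finCP])
  have iCP: "i \<in> CP" unfolding CP_def using both i by auto
  have cov: "x \<in> CP \<or> y \<in> CP" if xy: "{x, y} \<in> W" for x y
  proof -
    have xr: "x \<in> {1..2*m}" and yr: "y \<in> {1..2*m}" using W_range[OF xy] by auto
    have "var x \<in> P \<or> var y \<in> P" using minprime_cover[OF P[unfolded I_def] xy] .
    then show ?thesis
    proof
      assume vx: "var x \<in> P"
      show ?thesis
      proof (cases "x = m + i")
        case True then have "y = i" using W_m[OF xy i] by simp
        then show ?thesis using iCP by simp
      next
        case False then show ?thesis using vx xr unfolding CP_def by simp
      qed
    next
      assume vy: "var y \<in> P"
      show ?thesis
      proof (cases "y = m + i")
        case True then have "x = i" using W_m[OF W_sym[OF xy] i] by simp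
        then show ?thesis using iCP by simp
      next
        case False then show ?thesis using vy yr unfolding CP_def by simp
      qed
    qed
  qed
  have IQ: "I \<subseteq> ?Q"
  proof
    fix f assume f: "f \<in> I"
    have "\<exists>k\<in>CP. lk a k \<noteq> 0" if a: "a \<in> ks f" for a
    proof -
      obtain g where g: "g \<in> GW" "\<forall>k. lk g k \<le> lk a k" using f a unfolding I_def MIB_def by blast
      obtain x y where xy: "g = e x y" "{x, y} \<in> W" using g(1) unfolding GW_def by blast
      have "1 \<le> lk g x" "1 \<le> lk g y" using xy wpos[OF xy(2)] wpos[OF W_sym[OF xy(2)]] W_neq[OF xy(2)]
        by (simp_all add: Ef)
      then show ?thesis using cov[OF xy(2)] g(2) by (metis le_trans not_one_le_zero)
    qed
    then show "f \<in> ?Q" using f unfolding I_def MIB_def PB_def by blast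
  qed
  have Pid: "is_ideal (poly_ring (2*m)) P" using Pp unfolding is_prime_ideal_def by blast
  have QP: "?Q \<subseteq> P" unfolding PB_MI
  proof (rule MI_least[OF Pid])
    fix g assume "g \<in> units CP"
    then obtain k where "k \<in> CP" "g = sg k 1" unfolding units_def by blast
    then show "sg g (1::'k) \<in> P" unfolding CP_def var_def by simp
  qed
  have "?Q = P" using Pmin Qp IQ QP by blast
  moreover have "m + i \<notin> CP" unfolding CP_def by simp
  then have "var (m + i) \<notin> ?Q" by (rule var_notin_PB)
  ultimately show False using both by blast
qed

lemma var_prod_notin:
  fixes P :: "'k::field mpoly set"
  assumes Pp: "is_prime_ideal (poly_ring (2*m)) P" and c: "c1 \<in> {1..2*m}" "c2 \<in> {1..2*m}"
    and v: "var c1 \<notin> P" "var c2 \<notin> P"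
  shows "sg (sg c1 N + sg c2 N) (1::'k) \<notin> P"
proof
  assume in_P: "sg (sg c1 N + sg c2 N) (1::'k) \<in> P"
  have ks: "ks (sg c1 N + sg c2 N) \<subseteq> {c1, c2}" using keys_add_exp[of "sg c1 N" "sg c2 N"] by auto
  then have "ks (sg c1 N + sg c2 N) \<subseteq> {1..2*m}" using c by blast
  then obtain z where "z \<in> ks (sg c1 N + sg c2 N)" "var z \<in> P" using mon_prime_var[OF Pp _ in_P] by blast
  then show False using ks v by blast
qed

lemma symb_helper:
  fixes I :: "'k::field mpoly set" and P :: "'k mpoly set"
  defines "I \<equiv> MIB (2*m) UNIV GW"
  assumes Pp: "is_prime_ideal (poly_ring (2*m)) P" and c: "c1 \<in> {1..2*m}" "c2 \<in> {1..2*m}" "c1 \<noteq> c2"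
    and v: "var c1 \<notin> P" "var c2 \<notin> P" and u: "ks u \<subseteq> {1..2*m}"
    and g: "{x, y} \<in> W" "{x', y'} \<in> W"
    and le: "\<And>k. lk (e x y) k + lk (e x' y') k \<le> lk u k + (if k = c1 \<or> k = c2 then N else 0)"
  shows "\<exists>s\<in>poly_ring (2*m) - P. s * sg u 1 \<in> ideal_prod (poly_ring (2*m)) I I"
proof -
  let ?\<sigma> = "sg c1 N + sg c2 N"
  let ?s = "sg ?\<sigma> (1::'k)"
  have ks: "ks ?\<sigma> \<subseteq> {c1, c2}" using keys_add_exp[of "sg c1 N" "sg c2 N"] by auto
  have sS: "?s \<in> poly_ring (2*m)" using PR_single ks c by blast
  have sP: "?s \<notin> P" using var_prod_notin[OF Pp c(1,2) v] .
  have gG: "e x y + e x' y' \<in> G2" unfolding G2_def GW_def using g by blast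
  have ksu: "ks (?\<sigma> + u) \<subseteq> {1..2*m}" using keys_add_exp[of ?\<sigma> u] ks c u by blast
  have "\<forall>k\<in>UNIV. lk (e x y + e x' y') k \<le> lk (?\<sigma> + u) k"
  proof
    fix k
    have "lk ?\<sigma> k = (if k = c1 \<or> k = c2 then N else 0)" using c(3) by (auto simp: lookup_add lookup_single when_def)
    then show "lk (e x y + e x' y') k \<le> lk (?\<sigma> + u) k" using le[of k] by (simp add: lookup_add)
  qed
  then have "sg (?\<sigma> + u) (1::'k) \<in> MIB (2*m) UNIV G2" using single_MIB[OF gG _ ksu] by blast
  moreover have "?s * sg u 1 = sg (?\<sigma> + u) (1::'k)" by (simp add: mult_single)
  ultimately have "?s * sg u 1 \<in> ideal_prod (poly_ring (2*m)) I I" using I2_eq[where 'k='k] unfolding I_def by simp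
  then show ?thesis using sS sP by blast
qed

end

context wsetup begin

lemma witness:
  fixes I :: "'k::field mpoly set" and x y :: nat
  defines "I \<equiv> MIB (2*m) UNIV GW"
  assumes ij: "{i, j} \<in> EH"
    and n1: "\<not> (2 * w i j \<le> x \<and> 2 * w j i \<le> y)"
    and n2: "\<not> (w i j \<le> x \<and> w j i + w j (m + j) \<le> y)"
    and c1: "(w i (m + i) \<le> x \<and> w j (m + j) \<le> y) \<or> 2 * w j (m + j) \<le> y"
    and c2: "w i j \<le> x \<or> w i (m + i) \<le> x"
    and c3: "2 * w j i \<le> y \<or> 2 * w j (m + j) \<le> y"
  shows "symb_power2 (poly_ring (2*m)) I \<noteq> ideal_prod (poly_ring (2*m)) I I"
proof -
  have ijV: "i \<in> V" "j \<in> V" "i \<noteq> j" using EH_edge[OF ij] by auto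
  let ?a = "w i j" let ?b = "w j i" let ?p = "w i (m + i)" let ?p' = "w j (m + j)"
  let ?q = "w (m + i) i" let ?q' = "w (m + j) j"
  have wi: "{i, m + i} \<in> W" and wj: "{j, m + j} \<in> W" using whisk_W ijV by auto
  have eW: "{i, j} \<in> W" using EH_W[OF ij] .
  have q'pos: "1 \<le> ?q'" using wpos[OF W_sym[OF wj]] .
  define u where "u = sg i x + sg j y + sg (m + j) ?q'"
  have dist: "m + j \<noteq> i" "m + j \<noteq> j" "m + i \<noteq> i" "m + i \<noteq> j" "m + i \<noteq> m + j" using ijV by auto
  have lu: "lk u k = (if k = i then x else 0) + (if k = j then y else 0) + (if k = m + j then ?q' else 0)" for k
    unfolding u_def by (simp add: lookup_add lookup_single when_def)
  have ksu: "ks u \<subseteq> {1..2*m}"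
  proof
    fix k assume "k \<in> ks u"
    then have "lk u k \<noteq> 0" by (simp add: in_keys_iff)
    then have "k = i \<or> k = j \<or> k = m + j" using lu[of k] by (auto split: if_splits)
    then show "k \<in> {1..2*m}" using ijV by auto
  qed
  have lE: "lk (e i j) k = (if k = i then ?a else 0) + (if k = j then ?b else 0)" for k by (simp add: Ef)
  have lWi: "lk (e i (m + i)) k = (if k = i then ?p else 0) + (if k = m + i then ?q else 0)" for k by (simp add: Ef)
  have lWj: "lk (e j (m + j)) k = (if k = j then ?p' else 0) + (if k = m + j then ?q' else 0)" for k by (simp add: Ef)
  have edge_sub: "e x1 y1 = e i j \<or> e x1 y1 = e j (m + j)" if xy: "{x1, y1} \<in> W" and le: "\<forall>k. lk (e x1 y1) k \<le> lk u k" for x1 y1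
  proof -
    have ne: "x1 \<noteq> y1" using W_neq[OF xy] .
    have "1 \<le> lk (e x1 y1) x1" using wpos[OF xy] ne by (simp add: Ef)
    then have "1 \<le> lk u x1" using le order_trans by blast
    then have x1s: "x1 = i \<or> x1 = j \<or> x1 = m + j" using lu[of x1] by (auto split: if_splits)
    have "1 \<le> lk (e x1 y1) y1" using wpos[OF W_sym[OF xy]] ne by (simp add: Ef)
    then have "1 \<le> lk u y1" using le order_trans by blast
    then have y1s: "y1 = i \<or> y1 = j \<or> y1 = m + j" using lu[of y1] by (auto split: if_splits)
    show ?thesis using xy
    proof (cases rule: W_cases)
      case 1
      then have "x1 \<noteq> m + j" "y1 \<noteq> m + j" using ijV by auto
      then have "(x1 = i \<and> y1 = j) \<or> (x1 = j \<and> y1 = i)" using x1s y1s ne by auto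
      then show ?thesis using e_sym by auto
    next
      case (2 i')
      then have "y1 = m + j" using x1s y1s ijV by auto
      then have "x1 = j" using 2 by simp
      then show ?thesis using \<open>y1 = m + j\<close> by simp
    next
      case (3 i')
      then have "x1 = m + j" using x1s y1s ijV by auto
      then have "y1 = j" using 3 by simp
      then show ?thesis using \<open>x1 = m + j\<close> e_sym by simp
    qed
  qed
  have notI2: "sg u (1::'k) \<notin> MIB (2*m) UNIV G2"
  proof
    assume "sg u (1::'k) \<in> MIB (2*m) UNIV G2"
    then obtain g where g: "g \<in> G2" "\<forall>k. lk g k \<le> lk u k" unfolding MIB_def by auto
    then obtain g1 g2 where gg: "g = g1 + g2" "g1 \<in> GW" "g2 \<in> GW" unfolding G2_def by blast
    obtain x1 y1 where x1: "g1 = e x1 y1" "{x1, y1} \<in> W" using gg(2) unfolding GW_def by blast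
    obtain x2 y2 where x2: "g2 = e x2 y2" "{x2, y2} \<in> W" using gg(3) unfolding GW_def by blast
    have le: "lk (e x1 y1) k + lk (e x2 y2) k \<le> lk u k" for k using g(2) gg(1) x1(1) x2(1) by (metis lookup_add)
    have le1: "\<forall>k. lk (e x1 y1) k \<le> lk u k" using le by (metis add_leD1)
    have le2: "\<forall>k. lk (e x2 y2) k \<le> lk u k" using le by (metis add_leD2)
    from edge_sub[OF x1(2) le1] edge_sub[OF x2(2) le2] show False
    proof (elim disjE)
      assume "e x1 y1 = e i j" "e x2 y2 = e i j"
      then show False using le[of i] le[of j] n1 lE lu dist ijV(3) by simp
    next
      assume "e x1 y1 = e i j" "e x2 y2 = e j (m + j)"
      then show False using le[of i] le[of j] n2 lE lWj lu dist ijV(3) by simp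
    next
      assume "e x1 y1 = e j (m + j)" "e x2 y2 = e i j"
      then show False using le[of i] le[of j] n2 lE lWj lu dist ijV(3) by simp
    next
      assume "e x1 y1 = e j (m + j)" "e x2 y2 = e j (m + j)"
      then show False using le[of "m + j"] q'pos lWj lu dist by simp
    qed
  qed
  define N where "N = 2 * (?a + ?b + ?p + ?p' + ?q + ?q') + x + y"
  have inS: "sg u (1::'k) \<in> poly_ring (2*m)" using PR_single[OF ksu] .
  have rng: "i \<in> {1..2*m}" "j \<in> {1..2*m}" "m + i \<in> {1..2*m}" "m + j \<in> {1..2*m}" using ijV by auto
  have symb: "\<exists>s\<in>poly_ring (2*m) - P. s * sg u 1 \<in> ideal_prod (poly_ring (2*m)) I I"
    if P: "P \<in> min_primes (poly_ring (2*m)) I" for P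
  proof -
    have Pp: "is_prime_ideal (poly_ring (2*m)) P" using P unfolding min_primes_def by blast
    have vi: "var i \<in> P \<or> var (m + i) \<in> P" using minprime_cover[OF P[unfolded I_def] wi] .
    have vj: "var j \<in> P \<or> var (m + j) \<in> P" using minprime_cover[OF P[unfolded I_def] wj] .
    have vij: "var i \<in> P \<or> var j \<in> P" using minprime_cover[OF P[unfolded I_def] eW] .
    have nbi: "\<not> (var i \<in> P \<and> var (m + i) \<in> P)" using minprime_notboth[OF P[unfolded I_def] ijV(1)] .
    have nbj: "\<not> (var j \<in> P \<and> var (m + j) \<in> P)" using minprime_notboth[OF P[unfolded I_def] ijV(2)] .
    have H: "\<exists>s\<in>poly_ring (2*m) - P. s * sg u 1 \<in> ideal_prod (poly_ring (2*m)) I I"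
      if "c1 \<in> {1..2*m}" "c2 \<in> {1..2*m}" "c1 \<noteq> c2" "var c1 \<notin> P" "var c2 \<notin> P" "{x1, y1} \<in> W" "{x2, y2} \<in> W"
         "\<And>k. lk (e x1 y1) k + lk (e x2 y2) k \<le> lk u k + (if k = c1 \<or> k = c2 then N else 0)"
      for c1 c2 x1 y1 x2 y2
      using symb_helper[OF Pp that(1-5) ksu that(6-8)] unfolding I_def by blast
    show ?thesis
    proof (cases "var i \<in> P")
      case True
      then have ni: "var (m + i) \<notin> P" using nbi by blast
      show ?thesis
      proof (cases "var j \<in> P")
        case True
        then have nj: "var (m + j) \<notin> P" using nbj by blast
        show ?thesis
        proof (cases "?p \<le> x \<and> ?p' \<le> y")
          case True
          show ?thesis
          proof (rule H[OF rng(3) rng(4) dist(5) ni nj wi wj])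
            fix k show "lk (e i (m + i)) k + lk (e j (m + j)) k \<le> lk u k + (if k = m + i \<or> k = m + j then N else 0)"
              using True dist ijV(3) unfolding lWi lWj lu N_def by auto
          qed
        next
          case False
          then have y2: "2 * ?p' \<le> y" using c1 by blast
          show ?thesis
          proof (rule H[OF rng(3) rng(4) dist(5) ni nj wj wj])
            fix k show "lk (e j (m + j)) k + lk (e j (m + j)) k \<le> lk u k + (if k = m + i \<or> k = m + j then N else 0)"
              using y2 dist ijV(3) unfolding lWj lu N_def by auto
          qed
        qed
      next
        case False
        then have nj: "var j \<notin> P" .
        have dd: "j \<noteq> m + i" using dist by simp
        show ?thesis
        proof (cases "?a \<le> x")
          case True
          show ?thesis
          proof (rule H[OF rng(2) rng(3) dd nj ni eW wj])
            fix k show "lk (e i j) k + lk (e j (m + j)) k \<le> lk u k + (if k = j \<or> k = m + i then N else 0)"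
              using True dist ijV(3) unfolding lE lWj lu N_def by auto
          qed
        next
          case False
          then have xp: "?p \<le> x" using c2 by blast
          show ?thesis
          proof (rule H[OF rng(2) rng(3) dd nj ni wi wj])
            fix k show "lk (e i (m + i)) k + lk (e j (m + j)) k \<le> lk u k + (if k = j \<or> k = m + i then N else 0)"
              using xp dist ijV(3) unfolding lWi lWj lu N_def by auto
          qed
        qed
      qed
    next
      case False
      then have ni: "var i \<notin> P" .
      have vj': "var j \<in> P" using vij False by blast
      then have nj: "var (m + j) \<notin> P" using nbj by blast
      have dd: "i \<noteq> m + j" using dist by simp
      show ?thesis
      proof (cases "2 * ?b \<le> y")
        case True
        show ?thesis
        proof (rule H[OF rng(1) rng(4) dd ni nj eW eW])
          fix k show "lk (e i j) k + lk (e i j) k \<le> lk u k + (if k = i \<or> k = m + j then N else 0)"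
            using True dist ijV(3) unfolding lE lu N_def by auto
        qed
      next
        case False
        then have y2: "2 * ?p' \<le> y" using c3 by blast
        show ?thesis
        proof (rule H[OF rng(1) rng(4) dd ni nj wj wj])
          fix k show "lk (e j (m + j)) k + lk (e j (m + j)) k \<le> lk u k + (if k = i \<or> k = m + j then N else 0)"
            using y2 dist ijV(3) unfolding lWj lu N_def by auto
        qed
      qed
    qed
  qed
  have "sg u (1::'k) \<in> symb_power2 (poly_ring (2*m)) I"
    unfolding symb_power2_def using inS symb by blast
  moreover have "sg u (1::'k) \<notin> ideal_prod (poly_ring (2*m)) I I"
    using notI2 I2_eq[where 'k='k] unfolding I_def by simp
  ultimately show ?thesis by blast
qed

end

context wsetup begin

lemma not_cond2:
  assumes nc: "\<not> cond2"
  shows "symb_power2 (poly_ring (2*m)) (MIB (2*m) UNIV GW :: 'k::field mpoly set) \<noteq>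
    ideal_prod (poly_ring (2*m)) (MIB (2*m) UNIV GW) (MIB (2*m) UNIV GW)"
proof -
  obtain i j where ij: "{i, j} \<in> EH" and F: "\<not> ((w i (m + i) = w i j \<and> w j (m + j) = w j i) \<or>
       (w i (m + i) \<ge> 2 * w i j \<and> w j (m + j) \<ge> 2 * w j i))"
    using nc unfolding cond2_def by blast
  have ji: "{j, i} \<in> EH" using ij by (simp add: insert_commute)
  have apos: "1 \<le> w i j" "1 \<le> w j i" using wpos[OF EH_W[OF ij]] wpos[OF EH_W[OF ji]] by auto
  show ?thesis
  proof (cases "w j (m + j) < w j i")
    case True
    show ?thesis
      by (rule witness[OF ij, where x = "w i j" and y = "2 * w j (m + j)"]) (use True apos in arith)+
  next
    case c1: False
    show ?thesis
    proof (cases "w i (m + i) < w i j")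
      case True
      show ?thesis
        by (rule witness[OF ji, where x = "w j i" and y = "2 * w i (m + i)"]) (use True apos in arith)+
    next
      case c2: False
      show ?thesis
      proof (cases "2 * w i j \<le> w i (m + i)")
        case True
        then have "w j (m + j) < 2 * w j i" using F by linarith
        then show ?thesis
          by (intro witness[OF ji, where x = "w j (m + j)" and y = "w i (m + i)"]) (use True c1 c2 apos in arith)+
      next
        case c3: False
        show ?thesis
        proof (cases "2 * w j i \<le> w j (m + j)")
          case True
          show ?thesis
            by (rule witness[OF ij, where x = "w i (m + i)" and y = "w j (m + j)"]) (use True c1 c2 c3 apos in arith)+
        next
          case c4: False
          show ?thesis
          proof (cases "w j i < w j (m + j)")
            case True
            show ?thesis
              by (rule witness[OF ij, where x = "w i (m + i)" and y = "2 * w j i"]) (use True c1 c2 c3 c4 apos in arith)+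
          next
            case False
            then have "w j (m + j) = w j i" using c1 by linarith
            then have "w i j < w i (m + i)" using F c2 by linarith
            then show ?thesis
              by (intro witness[OF ji, where x = "w j (m + j)" and y = "2 * w i j"]) (use \<open>w j (m + j) = w j i\<close> c1 c2 c3 c4 apos in arith)+
          qed
        qed
      qed
    qed
  qed
qed

end

theorem theorem3p8:
  fixes m :: nat and EH :: "nat set set" and w :: "nat \<Rightarrow> nat \<Rightarrow> nat"
    and I :: "'k::field mpoly set"
  assumes H_simple: "\<forall>e\<in>EH. \<exists>i j. e = {i, j} \<and> i \<noteq> j \<and> i \<in> {1..m} \<and> j \<in> {1..m}"
    and w_pos: "\<forall>i j. {i, j} \<in> whiskered m EH \<and> i \<noteq> j \<longrightarrow> w i j \<ge> 1"
    and I_def: "I = gen_ideal (poly_ring (2*m))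
                  {mono2 i (w i j) j (w j i) | i j. i < j \<and> {i, j} \<in> whiskered m EH}"
    and no_embedded: "ass_primes (poly_ring (2*m)) I = min_primes (poly_ring (2*m)) I"
    and tri_free: "triangle_free (whiskered m EH)"
  shows "symb_power2 (poly_ring (2*m)) I = ideal_prod (poly_ring (2*m)) I I \<longleftrightarrow>
    (\<forall>i j. {i, j} \<in> EH \<longrightarrow>
       (w i (m + i) = w i j \<and> w j (m + j) = w j i) \<or>
       (w i (m + i) \<ge> 2 * w i j \<and> w j (m + j) \<ge> 2 * w j i))"
proof -
  interpret ws: wsetup m EH w using H_simple w_pos tri_free by unfold_locales
  have Ieq0: "I = gen_ideal (poly_ring (2*m)) ((\<lambda>g. sg g (1::'k)) ` ws.GW)"
    using I_def ws.gens_eq[where 'k='k] by metis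
  have Ieq: "I = MIB (2*m) UNIV ws.GW" using Ieq0 ws.I_eq[where 'k='k] by metis
  have I2: "ideal_prod (poly_ring (2*m)) I I = MIB (2*m) UNIV ws.G2" using ws.I2_eq Ieq by simp
  show ?thesis
  proof
    assume eq: "symb_power2 (poly_ring (2*m)) I = ideal_prod (poly_ring (2*m)) I I"
    have "ws.cond2"
    proof (rule ccontr)
      assume "\<not> ws.cond2"
      then show False using ws.not_cond2 eq Ieq by blast
    qed
    then show "\<forall>i j. {i, j} \<in> EH \<longrightarrow>
       (w i (m + i) = w i j \<and> w j (m + j) = w j i) \<or>
       (w i (m + i) \<ge> 2 * w i j \<and> w j (m + j) \<ge> 2 * w j i)" unfolding ws.cond2_def .
  next
    assume "\<forall>i j. {i, j} \<in> EH \<longrightarrow>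
       (w i (m + i) = w i j \<and> w j (m + j) = w j i) \<or>
       (w i (m + i) \<ge> 2 * w i j \<and> w j (m + j) \<ge> 2 * w j i)"
    then have c: ws.cond2 unfolding ws.cond2_def .
    have "symb_power2 (poly_ring (2*m)) I \<subseteq> MIB (2*m) UNIV ws.G2" using ws.symb_sub[OF c] Ieq by simp
    moreover have "MIB (2*m) UNIV ws.G2 \<subseteq> symb_power2 (poly_ring (2*m)) I" using ws.I2_sub_symb Ieq by simp
    ultimately show "symb_power2 (poly_ring (2*m)) I = ideal_prod (poly_ring (2*m)) I I" using I2 by blast
  qed
qed


end
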